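(* Let $\alpha>0$, $\beta\geq0$, and let $g\in H(\mathbb D)$ be such that $g$ has no zeros in $\mathbb D$ and an analytic branch of $\log(g)$ belongs to $\mathcal B$. Then $S_g: H^{\infty}_\alpha\rightarrow H^{\infty}_\beta$ is bounded if and only if $$\limsup_{t\rightarrow1^-}\sup_{0\leq\theta<2\pi}(1-t^2)^\beta\int_0^t\frac{|g(re^{i\theta})|}{(1-r^2)^{\alpha+1}}\,dr<+\infty\,.$$
   Context: $\mathbb D$ is the open unit disk and $H(\mathbb D)$ the space of analytic functions on $\mathbb D$. For $\alpha\geq0$, $H^{\infty}_\alpha=\{f\in H(\mathbb D): \|f\|_{H^\infty_\alpha}:=\sup_{z\in\mathbb D}(1-|z|^2)^\alpha|f(z)|<\infty\}$. The Bloch space is $\mathcal B=\{f\in H(\mathbb D): |f(0)|+\sup_{z\in\mathbb D}(1-|z|^2)|f'(z)|<\infty\}$. For $g\in H(\mathbb D)$, $(S_gf)(z)=\int_0^z f'(\omega)g(\omega)\,d\omega$. *)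

theory Defs
  imports "HOL-Complex_Analysis.Complex_Analysis"
begin

definition Hinf_weighted :: "real \<Rightarrow> (complex \<Rightarrow> complex) set" where
  "Hinf_weighted \<alpha> = {f. f holomorphic_on ball 0 1 \<and>
     bounded ((\<lambda>z. (1 - norm z ^ 2) powr \<alpha> * norm (f z)) ` ball 0 1)}"

definition Hinf_norm :: "real \<Rightarrow> (complex \<Rightarrow> complex) \<Rightarrow> real" where
  "Hinf_norm \<alpha> f = (SUP z\<in>ball 0 1. (1 - norm z ^ 2) powr \<alpha> * norm (f z))"

definition Bloch :: "(complex \<Rightarrow> complex) set" where
  "Bloch = {f. f holomorphic_on ball 0 1 \<and>
     bounded ((\<lambda>z. (1 - norm z ^ 2) * norm (deriv f z)) ` ball 0 1)}"

definition S_op :: "(complex \<Rightarrow> complex) \<Rightarrow> (complex \<Rightarrow> complex) \<Rightarrow> complex \<Rightarrow> complex" where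
  "S_op g f z = contour_integral (linepath 0 z) (\<lambda>w. deriv f w * g w)"

definition S_bounded :: "(complex \<Rightarrow> complex) \<Rightarrow> real \<Rightarrow> real \<Rightarrow> bool" where
  "S_bounded g \<alpha> \<beta> \<longleftrightarrow> (\<exists>C. \<forall>f\<in>Hinf_weighted \<alpha>.
      S_op g f \<in> Hinf_weighted \<beta> \<and> Hinf_norm \<beta> (S_op g f) \<le> C * Hinf_norm \<alpha> f)"

end

theory Submission
  imports Defs
begin

lemma primitive_ball:
  fixes F :: "complex \<Rightarrow> complex"
  assumes holF: "F holomorphic_on ball 0 1"
  shows "(\<lambda>z. contour_integral (linepath 0 z) F) holomorphic_on ball 0 1"
    and "\<And>z. z \<in> ball 0 1 \<Longrightarrow> ((\<lambda>z. contour_integral (linepath 0 z) F) has_field_derivative F z) (at z)"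
proof -
  obtain Q where Q: "\<And>x. x \<in> ball 0 1 \<Longrightarrow> (Q has_field_derivative F x) (at x within ball 0 1)"
    using holomorphic_convex_primitive'[OF convex_ball open_ball holF] by blast
  have Q': "(Q has_field_derivative F x) (at x)" if "x \<in> ball 0 1" for x
    using Q[OF that] that at_within_open[OF that open_ball] by metis
  have eq: "contour_integral (linepath 0 z) F = Q z - Q 0" if "z \<in> ball 0 1" for z
  proof -
    have "closed_segment 0 z \<subseteq> ball 0 1"
      using that convex_ball[of 0 1] by (simp add: closed_segment_subset)
    then have "(F has_contour_integral (Q z - Q 0)) (linepath 0 z)"
      using contour_integral_primitive[OF Q, of "linepath 0 z"] by simp
    then show ?thesis by (rule contour_integral_unique)
  qed
  show der: "((\<lambda>z. contour_integral (linepath 0 z) F) has_field_derivative F z) (at z)" if "z \<in> ball 0 1" for z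
  proof -
    have "((\<lambda>z. Q z - Q 0) has_field_derivative F z - 0) (at z)"
      by (intro derivative_intros Q'[OF that])
    then have "((\<lambda>z. Q z - Q 0) has_field_derivative F z) (at z)" by simp
    then show ?thesis
      by (rule has_field_derivative_transform_within_open[OF _ open_ball that]) (simp add: eq)
  qed
  show "(\<lambda>z. contour_integral (linepath 0 z) F) holomorphic_on ball 0 1"
    unfolding holomorphic_on_open[OF open_ball] using der by blast
qed
lemma radial_integral:
  fixes G :: "complex \<Rightarrow> complex"
  assumes contG: "continuous_on (ball 0 1) G" and t: "0 \<le> t" "t < 1" and z: "norm \<zeta> = 1"
  shows "contour_integral (linepath 0 (of_real t * \<zeta>)) G = \<zeta> * integral {0..t} (\<lambda>r. G (of_real r * \<zeta>))"
    and "(\<lambda>r. G (of_real r * \<zeta>)) integrable_on {0..t}"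
proof -
  have cH: "continuous_on {0..t} (\<lambda>r. G (of_real r * \<zeta>))"
    apply (rule continuous_on_compose2[OF contG]) 
    using t z by (auto intro!: continuous_intros simp: norm_mult)
  then show intH: "(\<lambda>r. G (of_real r * \<zeta>)) integrable_on {0..t}"
    by (rule integrable_continuous_interval)
  have "contour_integral (linepath 0 (of_real t * \<zeta>)) G
      = integral {0..1} (\<lambda>x. G (of_real (t * x) * \<zeta>) * (of_real t * \<zeta>))"
    unfolding contour_integral_integral
    by (simp add: linepath_def scaleR_conv_of_real mult.assoc mult.left_commute)
  also have "\<dots> = integral {0..1} (\<lambda>x. G (of_real (t * x) * \<zeta>)) * (of_real t * \<zeta>)"
    by simp
  also have "\<dots> = \<zeta> * integral {0..t} (\<lambda>r. G (of_real r * \<zeta>))"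
  proof (cases "t = 0")
    case True then show ?thesis by simp
  next
    case False
    with t have tp: "t > 0" by simp
    have img: "(\<lambda>x. x / t) ` {0..t} = {0..1}"
    proof
      show "(\<lambda>x. x / t) ` {0..t} \<subseteq> {0..1}" using tp by (auto simp: field_simps)
      show "{0..1} \<subseteq> (\<lambda>x. x / t) ` {0..t}"
      proof
        fix y :: real assume "y \<in> {0..1}"
        then have "y = (t*y)/t" "t*y \<in> {0..t}" using tp by (auto simp: mult_le_cancel_left1)
        then show "y \<in> (\<lambda>x. x / t) ` {0..t}" by blast
      qed
    qed
    have "integral {0..1} (\<lambda>x. G (of_real (t * x) * \<zeta>)) = (1 / \<bar>t\<bar>) *\<^sub>R integral {0..t} (\<lambda>r. G (of_real r * \<zeta>))"
      using integral_stretch_real[of t 0 t "\<lambda>r. G (of_real r * \<zeta>)"] tp img by simp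
    then show ?thesis using tp by (simp add: scaleR_conv_of_real field_simps)
  qed
  finally show "contour_integral (linepath 0 (of_real t * \<zeta>)) G = \<zeta> * integral {0..t} (\<lambda>r. G (of_real r * \<zeta>))" .
qed

lemma deriv_estimate:
  fixes f :: "complex \<Rightarrow> complex"
  assumes holf: "f holomorphic_on ball 0 1" and a: "a \<ge> 0" and N: "N \<ge> 0"
    and bnd: "\<And>z. z \<in> ball 0 1 \<Longrightarrow> (1 - norm z ^ 2) powr a * norm (f z) \<le> N"
    and w: "w \<in> ball 0 1"
  shows "norm (deriv f w) \<le> 4 powr (a+1) * N / (1 - norm w ^ 2) powr (a+1)"
proof -
  define r where "r = (1 - norm w) / 2"
  have nw: "norm w < 1" using w by simp
  have r: "r > 0" using nw by (simp add: r_def)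
  have sub: "cball w r \<subseteq> ball 0 1"
  proof
    fix x assume "x \<in> cball w r"
    then have "norm x \<le> norm w + r" using norm_triangle_ineq2[of x w] by (auto simp: dist_norm norm_minus_commute)
    then have "norm x < 1" using nw unfolding r_def by argo
    then show "x \<in> ball 0 1" by simp
  qed
  have w2: "1 - norm w ^ 2 > 0" using nw by (simp add: power_less_one_iff abs_less_iff)
  have w2le: "1 - norm w ^ 2 \<le> 2 * (1 - norm w)"
  proof -
    have "1 - norm w ^ 2 = (1 - norm w) * (1 + norm w)" by (simp add: power2_eq_square algebra_simps)
    also have "\<dots> \<le> (1 - norm w) * 2" using nw by (intro mult_left_mono) auto
    finally show ?thesis by simp
  qed
  have fx: "norm (f x) \<le> 4 powr a * N / (1 - norm w ^ 2) powr a" if "norm (w - x) = r" for x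
  proof -
    have nx: "norm x \<le> norm w + r" using norm_triangle_ineq2[of x w] that by (simp add: norm_minus_commute)
    then have nx1: "norm x < 1" using nw unfolding r_def by argo
    have x2: "1 - norm x ^ 2 > 0" using nx1 by (simp add: power_less_one_iff abs_less_iff)
    have "(1 - norm w ^ 2) / 4 \<le> 1 - norm x"
      using nx w2le unfolding r_def by argo
    also have "\<dots> \<le> 1 - norm x ^ 2"
      using nx1 by (simp add: power2_eq_square mult_left_le_one_le)
    finally have le: "(1 - norm w ^ 2) / 4 \<le> 1 - norm x ^ 2" .
    have "((1 - norm w ^ 2) / 4) powr a \<le> (1 - norm x ^ 2) powr a"
      using le w2 a by (intro powr_mono2) auto
    then have le2: "(1 - norm w ^ 2) powr a / 4 powr a \<le> (1 - norm x ^ 2) powr a"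
      using w2 by (simp add: powr_divide)
    have "x \<in> ball 0 1" using nx1 by simp
    from bnd[OF this] have "(1 - norm x ^ 2) powr a * norm (f x) \<le> N" .
    then have "(1 - norm w ^ 2) powr a / 4 powr a * norm (f x) \<le> N"
      using le2 by (meson mult_right_mono norm_ge_zero order_trans)
    then show ?thesis using w2 by (simp add: divide_simps mult.commute)
  qed
  have "norm ((deriv ^^ 1) f w) \<le> fact 1 * (4 powr a * N / (1 - norm w ^ 2) powr a) / r ^ 1"
    apply (rule Cauchy_inequality[OF _ _ r])
    using holf sub holomorphic_on_subset ball_subset_cball apply blast
    using holf sub holomorphic_on_imp_continuous_on continuous_on_subset apply blast
    using fx by blast
  then have d: "norm (deriv f w) \<le> (4 powr a * N / (1 - norm w ^ 2) powr a) / r" by simp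
  have "(4 powr a * N / (1 - norm w ^ 2) powr a) / r \<le> (4 powr a * N / (1 - norm w ^ 2) powr a) / ((1 - norm w ^ 2) / 4)"
    apply (rule divide_left_mono)
    using w2le w2 N by (auto simp: r_def)
  also have "\<dots> = 4 powr (a+1) * N / (1 - norm w ^ 2) powr (a+1)"
    using w2 by (simp add: powr_add field_simps)
  finally show ?thesis using d by linarith
qed

lemma radial_bound:
  fixes G :: "complex \<Rightarrow> complex"
  assumes contG: "continuous_on (ball 0 1) G" and t: "0 \<le> t" "t < 1" and z: "norm \<zeta> = 1"
  shows "norm (contour_integral (linepath 0 (of_real t * \<zeta>)) G) \<le> integral {0..t} (\<lambda>r. norm (G (of_real r * \<zeta>)))"
proof -
  have cH: "continuous_on {0..t} (\<lambda>r. G (of_real r * \<zeta>))"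
    apply (rule continuous_on_compose2[OF contG]) 
    using t z by (auto intro!: continuous_intros simp: norm_mult)
  have i1: "(\<lambda>r. G (of_real r * \<zeta>)) integrable_on {0..t}"
    using cH by (rule integrable_continuous_interval)
  have i2: "(\<lambda>r. norm (G (of_real r * \<zeta>))) integrable_on {0..t}"
    using cH by (intro integrable_continuous_interval continuous_intros)
  have "norm (contour_integral (linepath 0 (of_real t * \<zeta>)) G) = norm (integral {0..t} (\<lambda>r. G (of_real r * \<zeta>)))"
    using radial_integral(1)[OF contG t z] z by (simp add: norm_mult)
  also have "\<dots> \<le> integral {0..t} (\<lambda>r. norm (G (of_real r * \<zeta>)))"
    by (rule integral_norm_bound_integral[OF i1 i2]) simp
  finally show ?thesis .
qed

lemma polar_ball:
  fixes z :: complex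
  shows "z = of_real (norm z) * exp (\<i> * of_real (Arg2pi z))"
    and "norm (exp (\<i> * of_real (Arg2pi z))) = 1"
    and "0 \<le> Arg2pi z" and "Arg2pi z < 2 * pi"
  using Arg2pi_eq[of z] Arg2pi[of z] by auto

lemma norm_rz: "norm (\<zeta>::complex) = 1 \<Longrightarrow> 0 \<le> r \<Longrightarrow> norm (of_real r * \<zeta>) = r"
  by (simp add: norm_mult)

lemma hinf_pointwise:
  assumes "f \<in> Hinf_weighted a" "z \<in> ball 0 1"
  shows "(1 - norm z ^ 2) powr a * norm (f z) \<le> Hinf_norm a f"
proof -
  have "bounded ((\<lambda>z. (1 - norm z ^ 2) powr a * norm (f z)) ` ball 0 1)"
    using assms(1) by (simp add: Hinf_weighted_def)
  then have "bdd_above ((\<lambda>z. (1 - norm z ^ 2) powr a * norm (f z)) ` ball 0 1)"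
    by (rule bounded_imp_bdd_above)
  then show ?thesis unfolding Hinf_norm_def by (rule cSUP_upper[OF assms(2)])
qed

lemma hinf_norm_nonneg:
  assumes "f \<in> Hinf_weighted a"
  shows "0 \<le> Hinf_norm a f"
proof -
  have "0 \<le> (1 - norm (0::complex) ^ 2) powr a * norm (f 0)" by simp
  also have "\<dots> \<le> Hinf_norm a f" by (rule hinf_pointwise[OF assms]) simp
  finally show ?thesis .
qed

lemma hinf_norm_le:
  assumes "\<And>z. z \<in> ball 0 1 \<Longrightarrow> (1 - norm z ^ 2) powr a * norm (f z) \<le> M"
  shows "Hinf_norm a f \<le> M"
  unfolding Hinf_norm_def
  by (rule cSUP_least) (use assms in auto)

lemma hinf_memI:
  assumes "f holomorphic_on ball 0 1" "\<And>z. z \<in> ball 0 1 \<Longrightarrow> (1 - norm z ^ 2) powr a * norm (f z) \<le> M"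
  shows "f \<in> Hinf_weighted a"
  unfolding Hinf_weighted_def
proof (intro CollectI conjI assms(1))
  show "bounded ((\<lambda>z. (1 - norm z ^ 2) powr a * norm (f z)) ` ball 0 1)"
    unfolding bounded_iff
  proof (intro exI ballI)
    fix y assume "y \<in> (\<lambda>z. (1 - norm z ^ 2) powr a * norm (f z)) ` ball 0 1"
    then obtain z where "z \<in> ball 0 1" "y = (1 - norm z ^ 2) powr a * norm (f z)" by blast
    then show "norm y \<le> M" using assms(2)[of z] by simp
  qed
qed

lemma S_op_holo:
  assumes "f holomorphic_on ball 0 1" "g holomorphic_on ball 0 1"
  shows "S_op g f holomorphic_on ball 0 1"
proof -
  have "(\<lambda>w. deriv f w * g w) holomorphic_on ball 0 1"
    using assms by (intro holomorphic_intros holomorphic_deriv) auto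
  then show ?thesis unfolding S_op_def[abs_def] by (rule primitive_ball(1))
qed

lemma sufficiency:
  fixes g :: "complex \<Rightarrow> complex"
  assumes a: "\<alpha> > 0" and b: "\<beta> \<ge> 0" and holg: "g holomorphic_on ball 0 1"
    and K: "\<And>t \<theta>. 0 \<le> t \<Longrightarrow> t < 1 \<Longrightarrow> 0 \<le> \<theta> \<Longrightarrow> \<theta> < 2*pi \<Longrightarrow>
       (1 - t\<^sup>2) powr \<beta> * integral {0..t} (\<lambda>r. norm (g (of_real r * exp (\<i> * of_real \<theta>))) / (1 - r\<^sup>2) powr (\<alpha> + 1)) \<le> K"
  shows "S_bounded g \<alpha> \<beta>"
  unfolding S_bounded_def
proof (intro exI ballI conjI)
  fix f assume fH: "f \<in> Hinf_weighted \<alpha>"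
  define N where "N = Hinf_norm \<alpha> f"
  have N0: "N \<ge> 0" unfolding N_def by (rule hinf_norm_nonneg[OF fH])
  have holf: "f holomorphic_on ball 0 1" using fH by (simp add: Hinf_weighted_def)
  define F where "F = (\<lambda>w. deriv f w * g w)"
  have holF: "F holomorphic_on ball 0 1" unfolding F_def
    using holf holg by (intro holomorphic_intros holomorphic_deriv) auto
  have contF: "continuous_on (ball 0 1) F" using holF by (rule holomorphic_on_imp_continuous_on)
  have contg: "continuous_on (ball 0 1) g" using holg by (rule holomorphic_on_imp_continuous_on)
  have dest: "norm (deriv f w) \<le> 4 powr (\<alpha>+1) * N / (1 - norm w ^ 2) powr (\<alpha>+1)" if "w \<in> ball 0 1" for w
    by (rule deriv_estimate[OF holf _ N0 _ that]) (use a hinf_pointwise[OF fH] in \<open>auto simp: N_def\<close>)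
  have key: "(1 - norm z ^ 2) powr \<beta> * norm (S_op g f z) \<le> 4 powr (\<alpha>+1) * K * N" if z: "z \<in> ball 0 1" for z
  proof -
    define t where "t = norm z"
    define \<theta> where "\<theta> = Arg2pi z"
    define \<zeta> where "\<zeta> = exp (\<i> * of_real \<theta>)"
    have zeq: "z = of_real t * \<zeta>" and n\<zeta>: "norm \<zeta> = 1" and th: "0 \<le> \<theta>" "\<theta> < 2*pi"
      using polar_ball[of z] by (auto simp: t_def \<theta>_def \<zeta>_def)
    have t: "0 \<le> t" "t < 1" using z by (auto simp: t_def)
    have r2: "1 - r^2 > 0" if "r \<in> {0..t}" for r :: real
      using that t by (simp add: power_less_one_iff abs_less_iff)
    have inball: "of_real r * \<zeta> \<in> ball 0 1" if "r \<in> {0..t}" for r :: real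
      using that t n\<zeta> by (simp add: norm_mult)
    have c1: "continuous_on {0..t} (\<lambda>r. norm (F (of_real r * \<zeta>)))"
      by (intro continuous_intros continuous_on_compose2[OF contF]) (use inball in auto)
    have c2: "continuous_on {0..t} (\<lambda>r. norm (g (of_real r * \<zeta>)) / (1 - r\<^sup>2) powr (\<alpha> + 1))"
      by (intro continuous_intros continuous_on_compose2[OF contg]) (use inball r2 in \<open>force+\<close>)
    have "norm (S_op g f z) = norm (contour_integral (linepath 0 (of_real t * \<zeta>)) F)"
      by (simp add: S_op_def F_def zeq)
    also have "\<dots> \<le> integral {0..t} (\<lambda>r. norm (F (of_real r * \<zeta>)))"
      by (rule radial_bound[OF contF t n\<zeta>])
    also have "\<dots> \<le> integral {0..t} (\<lambda>r. 4 powr (\<alpha>+1) * N * (norm (g (of_real r * \<zeta>)) / (1 - r\<^sup>2) powr (\<alpha> + 1)))"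
    proof (rule integral_le)
      show "(\<lambda>r. norm (F (of_real r * \<zeta>))) integrable_on {0..t}" using c1 by (rule integrable_continuous_interval)
      show "(\<lambda>r. 4 powr (\<alpha>+1) * N * (norm (g (of_real r * \<zeta>)) / (1 - r\<^sup>2) powr (\<alpha> + 1))) integrable_on {0..t}"
        using c2 by (intro integrable_continuous_interval continuous_on_mult_left)
      fix r assume r: "r \<in> {0..t}"
      have nr: "norm (of_real r * \<zeta>) = r" using r n\<zeta> by (simp add: norm_mult)
      have "norm (F (of_real r * \<zeta>)) = norm (deriv f (of_real r * \<zeta>)) * norm (g (of_real r * \<zeta>))"
        by (simp add: F_def norm_mult)
      also have "\<dots> \<le> (4 powr (\<alpha>+1) * N / (1 - r ^ 2) powr (\<alpha>+1)) * norm (g (of_real r * \<zeta>))"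
        using dest[OF inball[OF r]] nr by (intro mult_right_mono) auto
      finally show "norm (F (of_real r * \<zeta>)) \<le> 4 powr (\<alpha>+1) * N * (norm (g (of_real r * \<zeta>)) / (1 - r\<^sup>2) powr (\<alpha> + 1))"
        by simp
    qed
    also have "\<dots> = 4 powr (\<alpha>+1) * N * integral {0..t} (\<lambda>r. norm (g (of_real r * \<zeta>)) / (1 - r\<^sup>2) powr (\<alpha> + 1))"
      by (rule integral_mult_right)
    finally have le: "norm (S_op g f z) \<le> 4 powr (\<alpha>+1) * N * integral {0..t} (\<lambda>r. norm (g (of_real r * \<zeta>)) / (1 - r\<^sup>2) powr (\<alpha> + 1))" .
    have "(1 - norm z ^ 2) powr \<beta> * norm (S_op g f z)
        \<le> (1 - t ^ 2) powr \<beta> * (4 powr (\<alpha>+1) * N * integral {0..t} (\<lambda>r. norm (g (of_real r * \<zeta>)) / (1 - r\<^sup>2) powr (\<alpha> + 1)))"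
      using le unfolding t_def by (rule mult_left_mono) simp
    also have "\<dots> = 4 powr (\<alpha>+1) * N * ((1 - t ^ 2) powr \<beta> * integral {0..t} (\<lambda>r. norm (g (of_real r * \<zeta>)) / (1 - r\<^sup>2) powr (\<alpha> + 1)))"
      by (simp add: algebra_simps)
    also have "\<dots> \<le> 4 powr (\<alpha>+1) * N * K"
      using K[OF t th] N0 by (intro mult_left_mono) (auto simp: \<zeta>_def)
    finally show ?thesis by (simp add: algebra_simps)
  qed
  show "S_op g f \<in> Hinf_weighted \<beta>"
    by (rule hinf_memI[OF S_op_holo[OF holf holg] key])
  show "Hinf_norm \<beta> (S_op g f) \<le> 4 powr (\<alpha>+1) * K * Hinf_norm \<alpha> f"
    using hinf_norm_le[of \<beta> "S_op g f", OF key] by (simp add: N_def)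
qed

lemma limsup_to_bound:
  fixes P :: "real \<Rightarrow> real \<Rightarrow> real"
  assumes L: "Limsup (at_left 1) (\<lambda>t. SUP \<theta>\<in>{0..<2*pi}. ereal (P t \<theta>)) < \<infinity>"
    and small: "\<And>b. b < 1 \<Longrightarrow> \<exists>M. \<forall>t\<in>{0..b}. \<forall>\<theta>\<in>{0..<2*pi}. P t \<theta> \<le> M"
  shows "\<exists>K. \<forall>t\<in>{0..<1}. \<forall>\<theta>\<in>{0..<2*pi}. P t \<theta> \<le> K"
proof -
  obtain M where M: "Limsup (at_left 1) (\<lambda>t. SUP \<theta>\<in>{0..<2*pi}. ereal (P t \<theta>)) < ereal M"
  proof (cases "Limsup (at_left 1) (\<lambda>t. SUP \<theta>\<in>{0..<2*pi}. ereal (P t \<theta>))")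
    case (real r) then show ?thesis using that[of "r+1"] by simp
  next
    case PInf then show ?thesis using L by simp
  next
    case MInf then show ?thesis using that[of 0] by simp
  qed
  have "eventually (\<lambda>t. (SUP \<theta>\<in>{0..<2*pi}. ereal (P t \<theta>)) < ereal M) (at_left (1::real))"
    by (rule Limsup_lessD[OF M])
  then obtain b where b: "b < 1" and bP: "\<And>y. y > b \<Longrightarrow> y < 1 \<Longrightarrow> (SUP \<theta>\<in>{0..<2*pi}. ereal (P y \<theta>)) < ereal M"
    unfolding eventually_at_left_field by blast
  obtain M2 where M2: "\<forall>t\<in>{0..b}. \<forall>\<theta>\<in>{0..<2*pi}. P t \<theta> \<le> M2"
    using small[OF b] by blast
  show ?thesis
  proof (intro exI[of _ "max M M2"] ballI)
    fix t \<theta> :: real assume t: "t \<in> {0..<1}" and th: "\<theta> \<in> {0..<2*pi}"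
    show "P t \<theta> \<le> max M M2"
    proof (cases "t \<le> b")
      case True
      then have "t \<in> {0..b}" using t by simp
      then have "P t \<theta> \<le> M2" using M2 th by blast
      then show ?thesis by simp
    next
      case False
      then have "ereal (P t \<theta>) \<le> (SUP \<theta>\<in>{0..<2*pi}. ereal (P t \<theta>))" using th by (intro SUP_upper)
      also have "\<dots> < ereal M" using bP[of t] False t by simp
      finally show ?thesis by simp
    qed
  qed
qed

lemma bound_to_limsup:
  fixes P :: "real \<Rightarrow> real \<Rightarrow> real"
  assumes K: "\<And>t \<theta>. t \<in> {0..<1} \<Longrightarrow> \<theta> \<in> {0..<2*pi} \<Longrightarrow> P t \<theta> \<le> K"
  shows "Limsup (at_left 1) (\<lambda>t. SUP \<theta>\<in>{0..<2*pi}. ereal (P t \<theta>)) < \<infinity>"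
proof -
  have "eventually (\<lambda>t. t \<in> {0<..<1}) (at_left (1::real))"
    by (rule eventually_at_left_real) simp
  then have "eventually (\<lambda>t. (SUP \<theta>\<in>{0..<2*pi}. ereal (P t \<theta>)) \<le> ereal K) (at_left (1::real))"
  proof (rule eventually_mono)
    fix t :: real assume "t \<in> {0<..<1}"
    then show "(SUP \<theta>\<in>{0..<2*pi}. ereal (P t \<theta>)) \<le> ereal K"
      using K by (intro SUP_least) auto
  qed
  then have "Limsup (at_left 1) (\<lambda>t. SUP \<theta>\<in>{0..<2*pi}. ereal (P t \<theta>)) \<le> ereal K"
    by (rule Limsup_bounded)
  moreover have "ereal K < \<infinity>" by simp
  ultimately show ?thesis by (rule le_less_trans)
qed

lemma small_bound:
  fixes g :: "complex \<Rightarrow> complex"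
  assumes a: "\<alpha> > 0" and bt: "\<beta> \<ge> 0" and holg: "g holomorphic_on ball 0 1" and b: "b < 1"
  shows "\<exists>M. \<forall>t\<in>{0..b}. \<forall>\<theta>\<in>{0..<2*pi}. (1 - t\<^sup>2) powr \<beta> *
        integral {0..t} (\<lambda>r. norm (g (of_real r * exp (\<i> * of_real \<theta>))) / (1 - r\<^sup>2) powr (\<alpha> + 1)) \<le> M"
proof (cases "b < 0")
  case True then show ?thesis by auto
next
  case False
  then have b0: "0 \<le> b" by simp
  have sub: "cball 0 b \<subseteq> ball (0::complex) 1" using b by auto
  have "compact (g ` cball 0 b)"
    by (rule compact_continuous_image) (use holomorphic_on_imp_continuous_on[OF holg] continuous_on_subset sub in auto)
  then obtain Mg where Mg: "\<And>z. z \<in> cball 0 b \<Longrightarrow> norm (g z) \<le> Mg"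
    using compact_imp_bounded bounded_iff by (metis image_eqI)
  have b2: "1 - b^2 > 0" using b b0 by (simp add: power_less_one_iff abs_less_iff)
  define c where "c = Mg / (1 - b^2) powr (\<alpha>+1)"
  have "norm (g 0) \<le> Mg" using Mg b0 by simp
  then have "0 \<le> Mg" using norm_ge_zero order_trans by blast
  then have c0: "c \<ge> 0" unfolding c_def by simp
  show ?thesis
  proof (intro exI[of _ c] ballI)
    fix t \<theta> assume t: "t \<in> {0..b}" and th: "\<theta> \<in> {0..<2*pi}"
    define \<zeta> where "\<zeta> = exp (\<i> * of_real \<theta>)"
    have n\<zeta>: "norm \<zeta> = 1" by (simp add: \<zeta>_def)
    have r2: "1 - r^2 > 0" "1 - b^2 \<le> 1 - r^2" if "r \<in> {0..t}" for r :: real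
      using that t b by (auto simp: power_less_one_iff abs_less_iff intro!: power_mono)
    have contg: "continuous_on (ball 0 1) g" using holg by (rule holomorphic_on_imp_continuous_on)
    have inball: "of_real r * \<zeta> \<in> ball 0 1" if "r \<in> {0..t}" for r :: real
      using that t b n\<zeta> by (simp add: norm_mult)
    have c2: "continuous_on {0..t} (\<lambda>r. norm (g (of_real r * \<zeta>)) / (1 - r\<^sup>2) powr (\<alpha> + 1))"
      by (intro continuous_intros continuous_on_compose2[OF contg]) (use inball r2 in \<open>force+\<close>)
    have I: "integral {0..t} (\<lambda>r. norm (g (of_real r * \<zeta>)) / (1 - r\<^sup>2) powr (\<alpha> + 1)) \<le> integral {0..t} (\<lambda>r. c)"
    proof (rule integral_le)
      show "(\<lambda>r. norm (g (of_real r * \<zeta>)) / (1 - r\<^sup>2) powr (\<alpha> + 1)) integrable_on {0..t}"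
        using c2 by (rule integrable_continuous_interval)
      fix r assume r: "r \<in> {0..t}"
      have "norm (of_real r * \<zeta>) \<le> b" using r t n\<zeta> by (simp add: norm_mult)
      then have gm: "norm (g (of_real r * \<zeta>)) \<le> Mg" by (intro Mg) simp
      have "(1 - b^2) powr (\<alpha>+1) \<le> (1 - r^2) powr (\<alpha>+1)"
        using r2[OF r] b2 a by (intro powr_mono2) auto
      then show "norm (g (of_real r * \<zeta>)) / (1 - r\<^sup>2) powr (\<alpha> + 1) \<le> c"
        unfolding c_def using gm b2 \<open>0 \<le> Mg\<close> by (intro frac_le) auto
    qed auto
    also have "\<dots> = t * c" using t by simp
    also have "\<dots> \<le> c" using t b c0 by (intro mult_left_le_one_le) auto
    finally have I': "integral {0..t} (\<lambda>r. norm (g (of_real r * \<zeta>)) / (1 - r\<^sup>2) powr (\<alpha> + 1)) \<le> c" .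
    have I0: "0 \<le> integral {0..t} (\<lambda>r. norm (g (of_real r * \<zeta>)) / (1 - r\<^sup>2) powr (\<alpha> + 1))"
      by (rule integral_nonneg) (use c2 integrable_continuous_interval in auto)
    have p: "(1 - t\<^sup>2) powr \<beta> \<le> 1"
      using t b bt by (intro powr_le1) (auto simp: abs_le_iff power_le_one)
    have "(1 - t\<^sup>2) powr \<beta> * integral {0..t} (\<lambda>r. norm (g (of_real r * \<zeta>)) / (1 - r\<^sup>2) powr (\<alpha> + 1)) \<le> 1 * c"
      using p I' I0 by (intro mult_mono) auto
    then show "(1 - t\<^sup>2) powr \<beta> * integral {0..t} (\<lambda>r. norm (g (of_real r * exp (\<i> * of_real \<theta>))) / (1 - r\<^sup>2) powr (\<alpha> + 1)) \<le> c"
      by (simp add: \<zeta>_def)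
  qed
qed

definition Tg :: "complex \<Rightarrow> complex" where
  "Tg u = contour_integral (linepath 0 u) (\<lambda>s. exp (-(s^2)))"

lemma Tg_deriv: "(Tg has_field_derivative exp (-(u^2))) (at u)"
  and Tg_contour: "((\<lambda>s. exp (-(s^2))) has_contour_integral (Tg b - Tg a)) (linepath a b)"
  and Tg_0: "Tg 0 = 0"
proof -
  have hol: "(\<lambda>s::complex. exp (-(s^2))) holomorphic_on UNIV" by (intro holomorphic_intros)
  obtain Q0 where Q0: "\<And>x::complex. x \<in> UNIV \<Longrightarrow> (Q0 has_field_derivative exp (-(x^2))) (at x within UNIV)"
    using holomorphic_convex_primitive'[OF convex_UNIV open_UNIV hol] by metis
  obtain Q where Q: "\<And>x::complex. x \<in> UNIV \<Longrightarrow> (Q has_field_derivative exp (-(x^2))) (at x within UNIV)"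
    and Q': "\<And>x::complex. (Q has_field_derivative exp (-(x^2))) (at x)"
    using Q0 by (meson UNIV_I)
  have cQ: "((\<lambda>s. exp (-(s^2))) has_contour_integral (Q b - Q a)) (linepath a b)" for a b
    using contour_integral_primitive[OF Q, of "linepath a b"] by simp
  have eq: "Tg z = Q z - Q 0" for z
    unfolding Tg_def using cQ[where a=0 and b=z] by (rule contour_integral_unique)
  show "Tg 0 = 0" using eq[of 0] by simp
  show "((\<lambda>s. exp (-(s^2))) has_contour_integral (Tg b - Tg a)) (linepath a b)"
    using cQ[where a=a and b=b] by (simp add: eq)
  have "((\<lambda>z. Q z - Q 0) has_field_derivative exp (-(u^2)) - 0) (at u)"
    by (intro derivative_intros Q')
  then show "(Tg has_field_derivative exp (-(u^2))) (at u)"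
    by (simp add: eq[abs_def])
qed

definition Tr :: "real \<Rightarrow> real" where "Tr x = Re (Tg (of_real x))"

lemma Tr_deriv: "(Tr has_real_derivative exp (-(x^2))) (at x)"
proof -
  have "((\<lambda>x. Tg (of_real x)) has_vector_derivative exp (-((of_real x)^2))) (at x)"
    by (rule has_vector_derivative_real_field[OF Tg_deriv])
  then have "((\<lambda>x. Re (Tg (of_real x))) has_field_derivative Re (exp (-((of_real x)^2)))) (at x)"
    by (rule has_field_derivative_Re)
  moreover have "Re (exp (-((complex_of_real x)^2))) = exp (-(x^2))"
    by (metis Re_complex_of_real exp_of_real of_real_minus of_real_power)
  ultimately show ?thesis by (simp add: Tr_def[abs_def])
qed

lemma Tg_real: "Im (Tg (of_real x)) = 0"
proof -
  have d: "((\<lambda>x. Im (Tg (of_real x))) has_real_derivative 0) (at y)" for y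
  proof -
    have "((\<lambda>x. Tg (of_real x)) has_vector_derivative exp (-((of_real y)^2))) (at y)"
      by (rule has_vector_derivative_real_field[OF Tg_deriv])
    then have "((\<lambda>x. Im (Tg (of_real x))) has_field_derivative Im (exp (-((of_real y)^2)))) (at y)"
      by (rule has_field_derivative_Im)
    moreover have "Im (exp (-((complex_of_real y)^2))) = 0"
      by (metis Im_complex_of_real exp_of_real of_real_minus of_real_power)
    ultimately show ?thesis by simp
  qed
  have "Im (Tg (of_real x)) = Im (Tg (of_real 0))"
    using DERIV_isconst_all[of "\<lambda>x. Im (Tg (of_real x))"] d by blast
  then show ?thesis by (simp add: Tg_0)
qed

lemma Tg_of_real: "Tg (of_real x) = of_real (Tr x)"
  using Tg_real[of x] by (simp add: Tr_def complex_eq_iff)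

lemma Tr_0: "Tr 0 = 0" by (simp add: Tr_def Tg_0)

lemma Tr_odd: "Tr (-x) = - Tr x"
proof -
  have d: "((\<lambda>x. Tr (-x) + Tr x) has_real_derivative 0) (at y)" for y
  proof -
    have dm: "((\<lambda>x::real. -x) has_real_derivative -1) (at y)" by (auto intro!: derivative_eq_intros)
    have "((\<lambda>x. Tr (-x) + Tr x) has_real_derivative (exp (-((-y)^2)) * (-1) + exp (-(y^2)))) (at y)"
      by (rule DERIV_add[OF DERIV_chain2[OF Tr_deriv dm] Tr_deriv])
    then show ?thesis by simp
  qed
  have "Tr (-x) + Tr x = Tr (-0) + Tr 0"
    using DERIV_isconst_all[of "\<lambda>x. Tr (-x) + Tr x"] d by blast
  then show ?thesis by (simp add: Tr_0)
qed

lemma gauss_le: "exp (-((x::real)^2)) \<le> exp 1 * exp (-2 * \<bar>x\<bar>)"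
proof -
  have "-(x^2) \<le> 1 + (-2 * \<bar>x\<bar>)"
  proof -
    have "0 \<le> (\<bar>x\<bar> - 1)^2" by simp
    also have "(\<bar>x\<bar> - 1)^2 = x^2 - 2 * \<bar>x\<bar> + 1"
      by (simp add: power2_eq_square algebra_simps abs_mult_self_eq)
    finally show ?thesis by simp
  qed
  then have "exp (-(x^2)) \<le> exp (1 + (-2 * \<bar>x\<bar>))" by (subst exp_le_cancel_iff)
  also have "exp (1 + (-2 * \<bar>x\<bar>)) = exp 1 * exp (-2 * \<bar>x\<bar>)" by (rule exp_add)
  finally show ?thesis .
qed

lemma Tr_mono: assumes "x \<le> y" shows "Tr x \<le> Tr y"
proof (rule DERIV_nonneg_imp_nondecreasing[of x y Tr])
  fix z :: real show "\<exists>d. (Tr has_real_derivative d) (at z) \<and> 0 \<le> d"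
    by (intro exI[of _ "exp (-(z^2))"] conjI Tr_deriv exp_ge_zero)
qed (rule assms)

lemma Tr_tail: assumes "0 \<le> x" "x \<le> y" shows "Tr y - Tr x \<le> exp 1 / 2 * exp (-2 * x)"
proof -
  define D where "D = (\<lambda>y. Tr y + exp 1 / 2 * exp (-2 * y))"
  have "D y \<le> D x"
  proof (rule DERIV_nonpos_imp_nonincreasing[of x y D])
    fix z assume z: "x \<le> z" "z \<le> y"
    have d2: "((\<lambda>y. exp 1 / 2 * exp (-2 * y)) has_real_derivative exp 1 / 2 * (exp (-2 * z) * (-2))) (at z)"
      by (auto intro!: derivative_eq_intros)
    have "(D has_real_derivative (exp (-(z^2)) + exp 1 / 2 * (exp (-2 * z) * (-2)))) (at z)"
      unfolding D_def by (rule DERIV_add[OF Tr_deriv d2])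
    moreover have "exp (-(z^2)) + exp 1 / 2 * (exp (-2 * z) * (-2)) \<le> 0"
      using gauss_le[of z] z assms by simp
    ultimately show "\<exists>d. (D has_real_derivative d) (at z) \<and> d \<le> 0" by blast
  qed (use assms in auto)
  then have "Tr y - Tr x \<le> exp 1 / 2 * exp (-2 * x) - exp 1 / 2 * exp (-2 * y)"
    by (simp add: D_def)
  also have "\<dots> \<le> exp 1 / 2 * exp (-2 * x)" by simp
  finally show ?thesis .
qed

lemma Tr_1_pos: "Tr 1 > 0"
proof -
  have "Tr 0 < Tr 1"
  proof (rule DERIV_pos_imp_increasing[of 0 1 Tr])
    fix z :: real show "\<exists>d. (Tr has_real_derivative d) (at z) \<and> 0 < d"
      by (intro exI[of _ "exp (-(z^2))"] conjI Tr_deriv exp_gt_zero)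
  qed simp
  then show ?thesis by (simp add: Tr_0)
qed

definition Lg :: real where "Lg = (SUP x\<in>{0..}. Tr x)"

lemma Tr_le_bound: "0 \<le> x \<Longrightarrow> Tr x \<le> exp 1 / 2"
  using Tr_tail[of 0 x] Tr_0 by simp

lemma Lg_props: "Lg > 0" and Lg_tail: "0 \<le> x \<Longrightarrow> Tr x \<le> Lg \<and> Lg - Tr x \<le> exp 1 / 2 * exp (-2 * x)"
proof -
  have bdd: "bdd_above (Tr ` {0..})" using Tr_le_bound by (intro bdd_aboveI2[where M="exp 1 / 2"]) auto
  have up: "Tr y \<le> Lg" if "0 \<le> y" for y unfolding Lg_def using bdd that by (intro cSUP_upper) auto
  show "Lg > 0" using up[of 1] Tr_1_pos by simp
  assume x: "0 \<le> x"
  have "Lg \<le> Tr x + exp 1 / 2 * exp (-2 * x)"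
    unfolding Lg_def
  proof (rule cSUP_least)
    fix y :: real assume y: "y \<in> {0..}"
    show "Tr y \<le> Tr x + exp 1 / 2 * exp (-2 * x)"
    proof (cases "x \<le> y")
      case True then show ?thesis using Tr_tail[OF x True] by simp
    next
      case False then have "Tr y \<le> Tr x" by (intro Tr_mono) simp
      moreover have "0 \<le> exp 1 / 2 * exp (-2 * x)" by simp
      ultimately show ?thesis by linarith
    qed
  qed simp
  then show "Tr x \<le> Lg \<and> Lg - Tr x \<le> exp 1 / 2 * exp (-2 * x)" using up[OF x] by simp
qed

lemma Tg_vertical:
  "norm (Tg (Complex x y) - Tg (of_real x)) \<le> \<bar>y\<bar> * exp (y^2) * exp (-(x^2))"
proof -
  have "norm (Tg (Complex x y) - Tg (of_real x)) \<le> exp (y^2 - x^2) * norm (Complex x y - of_real x)"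
  proof (rule has_contour_integral_bound_linepath[OF Tg_contour])
    fix s assume "s \<in> closed_segment (of_real x) (Complex x y)"
    then obtain u where u: "0 \<le> u" "u \<le> 1" and s: "s = (1 - u) *\<^sub>R of_real x + u *\<^sub>R Complex x y"
      unfolding closed_segment_def by blast
    have Re: "Re s = x" and Im: "Im s = u * y" unfolding s by (simp_all add: algebra_simps)
    have "norm (exp (-(s^2))) = exp (Re (-(s^2)))" by simp
    also have "Re (-(s^2)) = (Im s)^2 - (Re s)^2" by (simp add: power2_eq_square)
    also have "(Im s)^2 \<le> y^2"
      using Im u by (simp add: power_mult_distrib mult_left_le_one_le power_le_one)
    then have "exp ((Im s)^2 - (Re s)^2) \<le> exp (y^2 - x^2)" using Re by simp
    finally show "norm (exp (-(s^2))) \<le> exp (y^2 - x^2)" .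
  qed simp
  also have "norm (Complex x y - of_real x) = \<bar>y\<bar>"
    by (simp add: complex_of_real_def cmod_def)
  finally have n: "norm (Tg (Complex x y) - Tg (of_real x)) \<le> exp (y^2 - x^2) * \<bar>y\<bar>" .
  have e: "exp (y^2 - x^2) = exp (y^2) * exp (-(x^2))"
    by (metis exp_add diff_conv_add_uminus)
  show ?thesis using n unfolding e by (simp only: mult.commute mult.left_commute)
qed

definition Sg :: "complex \<Rightarrow> complex" where "Sg u = (Tg u / of_real Lg + 1) / 2"

lemma Tg_holo: "Tg holomorphic_on UNIV"
  using Tg_deriv holomorphic_on_open[OF open_UNIV] by blast

lemma Sg_holo: "Sg holomorphic_on UNIV"
  unfolding Sg_def[abs_def] using Lg_props(1)
  by (intro holomorphic_intros Tg_holo) auto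

lemma Sg_real: "Sg (of_real x) = of_real ((Tr x / Lg + 1) / 2)"
  by (simp add: Sg_def Tg_of_real)

lemma Sg_step: "\<bar>(Tr x / Lg + 1) / 2 - (if 0 \<le> x then 1 else 0)\<bar> \<le> exp 1 / (4 * Lg) * exp (-2 * \<bar>x\<bar>)"
proof -
  have L: "Lg > 0" by (rule Lg_props(1))
  show ?thesis
  proof (cases "0 \<le> x")
    case True
    from Lg_tail[OF True] have a: "Tr x \<le> Lg" "Lg - Tr x \<le> exp 1 / 2 * exp (-2 * x)" by auto
    have "\<bar>(Tr x / Lg + 1) / 2 - 1\<bar> = (Lg - Tr x) / (2 * Lg)"
      using a L by (simp add: field_simps abs_if)
    also have "\<dots> \<le> (exp 1 / 2 * exp (-2 * x)) / (2 * Lg)"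
      using a L by (intro divide_right_mono) auto
    finally show ?thesis using True L by (simp add: field_simps)
  next
    case False
    then have nx: "0 \<le> -x" by simp
    from Lg_tail[OF nx] have a: "Tr (-x) \<le> Lg" "Lg - Tr (-x) \<le> exp 1 / 2 * exp (-2 * (-x))" by auto
    have "\<bar>(Tr x / Lg + 1) / 2\<bar> = (Lg - Tr (-x)) / (2 * Lg)"
      using a L by (simp add: Tr_odd field_simps abs_if)
    also have "\<dots> \<le> (exp 1 / 2 * exp (-2 * (-x))) / (2 * Lg)"
      using a L by (intro divide_right_mono) auto
    finally show ?thesis using False L by (simp add: field_simps)
  qed
qed

lemma Sg_im: "\<bar>Im (Sg (Complex x y))\<bar> \<le> \<bar>y\<bar> * exp (y^2) * exp 1 * exp (-2 * \<bar>x\<bar>) / (2 * Lg)"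
proof -
  have L: "Lg > 0" by (rule Lg_props(1))
  have "Im (Sg (Complex x y)) = Im (Tg (Complex x y)) / (2 * Lg)"
    by (simp add: Sg_def Im_divide_of_real)
  also have "Im (Tg (Complex x y)) = Im (Tg (Complex x y) - Tg (of_real x))"
    by (simp add: Tg_real)
  finally have e: "\<bar>Im (Sg (Complex x y))\<bar> = \<bar>Im (Tg (Complex x y) - Tg (of_real x))\<bar> / (2 * Lg)"
    using L by simp
  have "\<bar>Im (Tg (Complex x y) - Tg (of_real x))\<bar> \<le> norm (Tg (Complex x y) - Tg (of_real x))"
    by (rule abs_Im_le_cmod)
  also have "\<dots> \<le> \<bar>y\<bar> * exp (y^2) * exp (-(x^2))" by (rule Tg_vertical)
  also have "\<dots> \<le> \<bar>y\<bar> * exp (y^2) * (exp 1 * exp (-2 * \<bar>x\<bar>))"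
    by (intro mult_left_mono gauss_le) auto
  finally show ?thesis unfolding e using L by (simp add: divide_right_mono mult.assoc)
qed

lemma geom_finite_le2:
  assumes "finite I"
  shows "(\<Sum>i\<in>I. (exp (-2::real)) ^ i) \<le> 2"
proof -
  define q :: real where "q = exp (-2)"
  have q0: "0 < q" by (simp add: q_def)
  have "exp (2::real) \<ge> 1 + 2" by (rule exp_ge_add_one_self_aux) simp
  then have q2: "q \<le> 1/2" unfolding q_def by (simp add: exp_minus field_simps)
  then have q1: "q < 1" by simp
  have sm: "summable (\<lambda>i. q ^ i)" using q0 q1 by (intro summable_geometric) simp
  have "(\<Sum>i\<in>I. q ^ i) \<le> (\<Sum>i. q ^ i)"
    by (rule sum_le_suminf[OF sm]) (use assms q0 in auto)
  also have "\<dots> = 1 / (1 - q)" using q0 q1 by (intro suminf_geometric) simp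
  also have "\<dots> \<le> 2" using q2 q1 by (simp add: field_simps)
  finally show ?thesis by (simp add: q_def)
qed

lemma sum_exp_bound:
  fixes v :: real and K :: nat
  shows "(\<Sum>k\<in>{1..K}. exp (-2 * \<bar>v - real k\<bar>)) \<le> 4"
proof -
  define q :: real where "q = exp (-2)"
  define A1 where "A1 = {k\<in>{1..K}. real k \<le> v}"
  define A2 where "A2 = {k\<in>{1..K}. \<not> real k \<le> v}"
  have split: "(\<Sum>k\<in>{1..K}. exp (-2 * \<bar>v - real k\<bar>)) = (\<Sum>k\<in>A1. exp (-2 * \<bar>v - real k\<bar>)) + (\<Sum>k\<in>A2. exp (-2 * \<bar>v - real k\<bar>))"
  proof -
    have U: "{1..K} = A1 \<union> A2" and D: "A1 \<inter> A2 = {}" and F: "finite A1" "finite A2"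
      by (auto simp: A1_def A2_def)
    show ?thesis unfolding U by (rule sum.union_disjoint[OF F D])
  qed
  define f :: int where "f = \<lfloor>v\<rfloor>"
  define c :: int where "c = \<lceil>v\<rceil>"
  have ex: "exp (-2 * real n) = q ^ n" for n :: nat
    by (simp add: q_def exp_of_nat_mult[symmetric] mult.commute)
  have s1: "(\<Sum>k\<in>A1. exp (-2 * \<bar>v - real k\<bar>)) \<le> 2"
  proof -
    have "(\<Sum>k\<in>A1. exp (-2 * \<bar>v - real k\<bar>)) \<le> (\<Sum>k\<in>A1. q ^ nat (f - int k))"
    proof (rule sum_mono)
      fix k assume k: "k \<in> A1"
      then have kv: "real k \<le> v" by (simp add: A1_def)
      then have kf: "int k \<le> f" unfolding f_def by (simp add: le_floor_iff)
      have "real (nat (f - int k)) = real_of_int f - real k" using kf by simp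
      also have "\<dots> \<le> v - real k" unfolding f_def by simp
      finally have "-2 * \<bar>v - real k\<bar> \<le> -2 * real (nat (f - int k))" using kv by simp
      then have "exp (-2 * \<bar>v - real k\<bar>) \<le> exp (-2 * real (nat (f - int k)))" by simp
      then show "exp (-2 * \<bar>v - real k\<bar>) \<le> q ^ nat (f - int k)" by (simp only: ex)
    qed
    also have "\<dots> = (\<Sum>i\<in>(\<lambda>k. nat (f - int k)) ` A1. q ^ i)"
    proof (rule sum.reindex[symmetric, unfolded comp_def])
      show "inj_on (\<lambda>k. nat (f - int k)) A1"
      proof (rule inj_onI)
        fix a b assume "a \<in> A1" "b \<in> A1" "nat (f - int a) = nat (f - int b)"
        moreover have "int a \<le> f" "int b \<le> f" using \<open>a \<in> A1\<close> \<open>b \<in> A1\<close> unfolding A1_def f_def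
          by (auto simp: le_floor_iff)
        ultimately show "a = b" by simp
      qed
    qed
    also have "\<dots> \<le> 2" unfolding q_def by (rule geom_finite_le2) (simp add: A1_def)
    finally show ?thesis .
  qed
  have s2: "(\<Sum>k\<in>A2. exp (-2 * \<bar>v - real k\<bar>)) \<le> 2"
  proof -
    have "(\<Sum>k\<in>A2. exp (-2 * \<bar>v - real k\<bar>)) \<le> (\<Sum>k\<in>A2. q ^ nat (int k - c))"
    proof (rule sum_mono)
      fix k assume k: "k \<in> A2"
      then have kv: "v < real k" by (simp add: A2_def)
      then have kc: "c \<le> int k" unfolding c_def by (simp add: ceiling_le_iff)
      have "real (nat (int k - c)) = real k - real_of_int c" using kc by simp
      also have "\<dots> \<le> real k - v" unfolding c_def by simp
      finally have "-2 * \<bar>v - real k\<bar> \<le> -2 * real (nat (int k - c))" using kv by simp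
      then have "exp (-2 * \<bar>v - real k\<bar>) \<le> exp (-2 * real (nat (int k - c)))" by simp
      then show "exp (-2 * \<bar>v - real k\<bar>) \<le> q ^ nat (int k - c)" by (simp only: ex)
    qed
    also have "\<dots> = (\<Sum>i\<in>(\<lambda>k. nat (int k - c)) ` A2. q ^ i)"
    proof (rule sum.reindex[symmetric, unfolded comp_def])
      show "inj_on (\<lambda>k. nat (int k - c)) A2"
      proof (rule inj_onI)
        fix a b assume "a \<in> A2" "b \<in> A2" "nat (int a - c) = nat (int b - c)"
        moreover have "c \<le> int a" "c \<le> int b" using \<open>a \<in> A2\<close> \<open>b \<in> A2\<close> unfolding A2_def c_def
          by (auto simp: ceiling_le_iff)
        ultimately show "a = b" by simp
      qed
    qed
    also have "\<dots> \<le> 2" unfolding q_def by (rule geom_finite_le2) (simp add: A2_def)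
    finally show ?thesis .
  qed
  show ?thesis using split s1 s2 by linarith
qed

definition Phi :: "(real \<Rightarrow> real) \<Rightarrow> real \<Rightarrow> nat \<Rightarrow> complex \<Rightarrow> complex" where
  "Phi \<phi> \<sigma> K w = of_real (\<phi> 0) + (\<Sum>k\<in>{1..K}. of_real (\<phi> (real k * \<sigma>) - \<phi> ((real k - 1) * \<sigma>)) * Sg ((w - of_real (real k * \<sigma>)) / of_real \<sigma>))"

lemma Phi_holo: "Phi \<phi> \<sigma> K holomorphic_on UNIV"
proof -
  have "(\<lambda>w. Sg ((w - of_real (real k * \<sigma>)) / of_real \<sigma>)) holomorphic_on UNIV" for k
    by (rule holomorphic_on_compose_gen[OF _ Sg_holo, unfolded o_def]) (auto intro!: holomorphic_intros)
  then show ?thesis unfolding Phi_def[abs_def]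
    by (intro holomorphic_intros) auto
qed

lemma telescope:
  fixes \<phi> :: "real \<Rightarrow> real"
  shows "(\<Sum>k\<in>{1..m}. \<phi> (real k * \<sigma>) - \<phi> ((real k - 1) * \<sigma>)) = \<phi> (real m * \<sigma>) - \<phi> 0"
proof (induction m)
  case 0 then show ?case by simp
next
  case (Suc m)
  have "(\<Sum>k\<in>{1..Suc m}. \<phi> (real k * \<sigma>) - \<phi> ((real k - 1) * \<sigma>))
      = (\<Sum>k\<in>{1..m}. \<phi> (real k * \<sigma>) - \<phi> ((real k - 1) * \<sigma>)) + (\<phi> (real (Suc m) * \<sigma>) - \<phi> ((real (Suc m) - 1) * \<sigma>))"
    by simp
  then show ?case using Suc by simp
qed

lemma Phi_real:
  "Phi \<phi> \<sigma> K (of_real x) = of_real (\<phi> 0 + (\<Sum>k\<in>{1..K}. (\<phi> (real k * \<sigma>) - \<phi> ((real k - 1) * \<sigma>)) * ((Tr ((x - real k * \<sigma>) / \<sigma>) / Lg + 1) / 2)))"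
proof -
  have e: "Sg ((of_real x - of_real (real k * \<sigma>)) / of_real \<sigma>) = of_real ((Tr ((x - real k * \<sigma>) / \<sigma>) / Lg + 1) / 2)" for k
    using Sg_real[of "(x - real k * \<sigma>) / \<sigma>"] by (simp only: of_real_diff of_real_divide)
  show ?thesis unfolding Phi_def e by (simp only: of_real_add of_real_sum of_real_mult)
qed

lemma Phi_approx:
  fixes \<phi> :: "real \<Rightarrow> real"
  assumes B: "B \<ge> 0" and \<sigma>: "\<sigma> > 0"
    and lip: "\<And>x y. 0 \<le> x \<Longrightarrow> 0 \<le> y \<Longrightarrow> \<bar>\<phi> x - \<phi> y\<bar> \<le> B * \<bar>x - y\<bar>"
    and x: "0 \<le> x" "x \<le> real K * \<sigma>"
  shows "\<bar>\<phi> x - Re (Phi \<phi> \<sigma> K (of_real x))\<bar> \<le> B * \<sigma> * (1 + exp 1 / Lg)"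
proof -
  have L: "Lg > 0" by (rule Lg_props(1))
  define d where "d k = \<phi> (real k * \<sigma>) - \<phi> ((real k - 1) * \<sigma>)" for k :: nat
  define S where "S k = (Tr ((x - real k * \<sigma>) / \<sigma>) / Lg + 1) / 2" for k :: nat
  define H where "H k = (if 0 \<le> (x - real k * \<sigma>) / \<sigma> then 1 else (0::real))" for k :: nat
  define m where "m = nat \<lfloor>x / \<sigma>\<rfloor>"
  have xs: "0 \<le> x / \<sigma>" using x \<sigma> by simp
  have mK: "m \<le> K"
  proof -
    have "x / \<sigma> \<le> real K" using x \<sigma> by (simp add: field_simps)
    then show ?thesis unfolding m_def by (simp add: nat_le_iff floor_le_iff)
  qed
  have Hk: "H k = (if k \<le> m then 1 else 0)" for k
  proof -
    have "0 \<le> (x - real k * \<sigma>) / \<sigma> \<longleftrightarrow> real k \<le> x / \<sigma>" using \<sigma> by (simp add: field_simps)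
    also have "\<dots> \<longleftrightarrow> k \<le> m" unfolding m_def using xs by (simp add: le_nat_iff le_floor_iff)
    finally show ?thesis by (simp add: H_def)
  qed
  have sumH: "(\<Sum>k\<in>{1..K}. d k * H k) = \<phi> (real m * \<sigma>) - \<phi> 0"
  proof -
    have "(\<Sum>k\<in>{1..K}. d k * H k) = (\<Sum>k\<in>{1..K}. if k \<le> m then d k else 0)"
      by (rule sum.cong) (simp_all add: Hk)
    also have "\<dots> = (\<Sum>k\<in>{1..K} \<inter> {k. k \<le> m}. d k)" by (simp add: sum.inter_restrict)
    also have "{1..K} \<inter> {k. k \<le> m} = {1..m}" using mK by auto
    also have "(\<Sum>k\<in>{1..m}. d k) = \<phi> (real m * \<sigma>) - \<phi> 0" unfolding d_def by (rule telescope)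
    finally show ?thesis .
  qed
  have dk: "\<bar>d k\<bar> \<le> B * \<sigma>" if "k \<ge> 1" for k
  proof -
    have "\<bar>d k\<bar> \<le> B * \<bar>real k * \<sigma> - (real k - 1) * \<sigma>\<bar>"
      unfolding d_def using that \<sigma> by (intro lip) auto
    also have "\<bar>real k * \<sigma> - (real k - 1) * \<sigma>\<bar> = \<sigma>" using \<sigma> by (simp add: algebra_simps)
    finally show ?thesis .
  qed
  have mx: "real m * \<sigma> \<le> x" "x - real m * \<sigma> \<le> \<sigma>" "0 \<le> real m * \<sigma>"
  proof -
    have f1: "real_of_int \<lfloor>x / \<sigma>\<rfloor> \<le> x / \<sigma>" "x / \<sigma> < real_of_int \<lfloor>x / \<sigma>\<rfloor> + 1" by linarith+
    have rm: "real m = real_of_int \<lfloor>x / \<sigma>\<rfloor>" unfolding m_def using xs by simp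
    have "real m * \<sigma> \<le> (x / \<sigma>) * \<sigma>" using f1(1) \<sigma> unfolding rm by (intro mult_right_mono) auto
    then show "real m * \<sigma> \<le> x" using \<sigma> by simp
    have "(x / \<sigma>) * \<sigma> < (real m + 1) * \<sigma>" using f1(2) \<sigma> unfolding rm by (intro mult_strict_right_mono) auto
    then show "x - real m * \<sigma> \<le> \<sigma>" using \<sigma> by (simp add: algebra_simps)
    show "0 \<le> real m * \<sigma>" using \<sigma> by simp
  qed
  have p1: "\<bar>\<phi> x - \<phi> (real m * \<sigma>)\<bar> \<le> B * \<sigma>"
  proof -
    have "\<bar>\<phi> x - \<phi> (real m * \<sigma>)\<bar> \<le> B * \<bar>x - real m * \<sigma>\<bar>" by (rule lip[OF x(1) mx(3)])
    also have "\<dots> \<le> B * \<sigma>" using mx B by (intro mult_left_mono) auto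
    finally show ?thesis .
  qed
  have p2: "\<bar>\<Sum>k\<in>{1..K}. d k * (H k - S k)\<bar> \<le> B * \<sigma> * (exp 1 / Lg)"
  proof -
    have "\<bar>\<Sum>k\<in>{1..K}. d k * (H k - S k)\<bar> \<le> (\<Sum>k\<in>{1..K}. \<bar>d k * (H k - S k)\<bar>)"
      by (rule sum_abs)
    also have "\<dots> \<le> (\<Sum>k\<in>{1..K}. B * \<sigma> * (exp 1 / (4 * Lg) * exp (-2 * \<bar>x / \<sigma> - real k\<bar>)))"
    proof (rule sum_mono)
      fix k assume k: "k \<in> {1..K}"
      have e: "(x - real k * \<sigma>) / \<sigma> = x / \<sigma> - real k" using \<sigma> by (simp add: field_simps)
      have "\<bar>H k - S k\<bar> \<le> exp 1 / (4 * Lg) * exp (-2 * \<bar>x / \<sigma> - real k\<bar>)"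
        using Sg_step[of "(x - real k * \<sigma>) / \<sigma>"] unfolding H_def S_def e by (simp add: abs_minus_commute)
      then show "\<bar>d k * (H k - S k)\<bar> \<le> B * \<sigma> * (exp 1 / (4 * Lg) * exp (-2 * \<bar>x / \<sigma> - real k\<bar>))"
        unfolding abs_mult using dk[of k] k by (intro mult_mono) auto
    qed
    also have "\<dots> = B * \<sigma> * (exp 1 / (4 * Lg)) * (\<Sum>k\<in>{1..K}. exp (-2 * \<bar>x / \<sigma> - real k\<bar>))"
      by (simp add: sum_distrib_left mult.assoc)
    also have "\<dots> \<le> B * \<sigma> * (exp 1 / (4 * Lg)) * 4"
      using B \<sigma> L by (intro mult_left_mono sum_exp_bound) auto
    also have "\<dots> = B * \<sigma> * (exp 1 / Lg)" by simp
    finally show ?thesis .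
  qed
  have "Re (Phi \<phi> \<sigma> K (of_real x)) = \<phi> 0 + (\<Sum>k\<in>{1..K}. d k * S k)"
    unfolding Phi_real d_def S_def by simp
  then have "\<phi> x - Re (Phi \<phi> \<sigma> K (of_real x)) = (\<phi> x - \<phi> (real m * \<sigma>)) + (\<Sum>k\<in>{1..K}. d k * (H k - S k))"
    using sumH by (simp add: algebra_simps sum_subtractf)
  then have "\<bar>\<phi> x - Re (Phi \<phi> \<sigma> K (of_real x))\<bar> \<le> \<bar>\<phi> x - \<phi> (real m * \<sigma>)\<bar> + \<bar>\<Sum>k\<in>{1..K}. d k * (H k - S k)\<bar>"
    by simp
  also have "\<dots> \<le> B * \<sigma> + B * \<sigma> * (exp 1 / Lg)" using p1 p2 by simp
  finally show ?thesis by (simp add: algebra_simps)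
qed

lemma Phi_im:
  fixes \<phi> :: "real \<Rightarrow> real"
  assumes B: "B \<ge> 0" and \<sigma>: "\<sigma> > 0"
    and lip: "\<And>x y. 0 \<le> x \<Longrightarrow> 0 \<le> y \<Longrightarrow> \<bar>\<phi> x - \<phi> y\<bar> \<le> B * \<bar>x - y\<bar>"
    and w: "\<bar>Im w\<bar> \<le> pi / 2"
  shows "Im (Phi \<phi> \<sigma> K w) \<le> B * \<sigma> * ((pi / (2 * \<sigma>)) * exp ((pi / (2 * \<sigma>))^2) * exp 1 / (2 * Lg)) * 4"
proof -
  have L: "Lg > 0" by (rule Lg_props(1))
  define Y where "Y = pi / (2 * \<sigma>)"
  define d where "d k = \<phi> (real k * \<sigma>) - \<phi> ((real k - 1) * \<sigma>)" for k :: nat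
  define v where "v = Re w / \<sigma>"
  have dk: "\<bar>d k\<bar> \<le> B * \<sigma>" if "k \<ge> 1" for k
  proof -
    have "\<bar>d k\<bar> \<le> B * \<bar>real k * \<sigma> - (real k - 1) * \<sigma>\<bar>"
      unfolding d_def using that \<sigma> by (intro lip) auto
    also have "\<bar>real k * \<sigma> - (real k - 1) * \<sigma>\<bar> = \<sigma>" using \<sigma> by (simp add: algebra_simps)
    finally show ?thesis .
  qed
  have arg: "(w - of_real (real k * \<sigma>)) / of_real \<sigma> = Complex (v - real k) (Im w / \<sigma>)" for k
    using \<sigma> by (simp add: complex_eq_iff v_def Re_divide_of_real Im_divide_of_real diff_divide_distrib)
  have imy: "\<bar>Im w / \<sigma>\<bar> \<le> Y" using w \<sigma> by (simp add: Y_def abs_divide field_simps)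
  have "Im (Phi \<phi> \<sigma> K w) = (\<Sum>k\<in>{1..K}. d k * Im (Sg (Complex (v - real k) (Im w / \<sigma>))))"
    unfolding Phi_def d_def arg by (simp add: Im_sum)
  also have "\<dots> \<le> (\<Sum>k\<in>{1..K}. B * \<sigma> * (Y * exp (Y^2) * exp 1 * exp (-2 * \<bar>v - real k\<bar>) / (2 * Lg)))"
  proof (rule sum_mono)
    fix k assume k: "k \<in> {1..K}"
    have "\<bar>Im (Sg (Complex (v - real k) (Im w / \<sigma>)))\<bar> \<le> \<bar>Im w / \<sigma>\<bar> * exp ((Im w / \<sigma>)^2) * exp 1 * exp (-2 * \<bar>v - real k\<bar>) / (2 * Lg)"
      by (rule Sg_im)
    also have "\<dots> \<le> Y * exp (Y^2) * exp 1 * exp (-2 * \<bar>v - real k\<bar>) / (2 * Lg)"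
    proof -
      have "\<bar>Im w / \<sigma>\<bar>^2 \<le> Y^2" by (rule power_mono[OF imy abs_ge_zero])
      then have "(Im w / \<sigma>)^2 \<le> Y^2" by (simp only: power2_abs)
      then have "exp ((Im w / \<sigma>)^2) \<le> exp (Y^2)" by simp
      then have "\<bar>Im w / \<sigma>\<bar> * exp ((Im w / \<sigma>)^2) \<le> Y * exp (Y^2)"
        using imy \<sigma> by (intro mult_mono) (auto simp: Y_def)
      then show ?thesis using L by (intro divide_right_mono mult_right_mono) auto
    qed
    finally have i: "\<bar>Im (Sg (Complex (v - real k) (Im w / \<sigma>)))\<bar> \<le> Y * exp (Y^2) * exp 1 * exp (-2 * \<bar>v - real k\<bar>) / (2 * Lg)" .
    have "d k * Im (Sg (Complex (v - real k) (Im w / \<sigma>))) \<le> \<bar>d k\<bar> * \<bar>Im (Sg (Complex (v - real k) (Im w / \<sigma>)))\<bar>"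
      by (simp add: abs_mult[symmetric])
    also have "\<dots> \<le> B * \<sigma> * (Y * exp (Y^2) * exp 1 * exp (-2 * \<bar>v - real k\<bar>) / (2 * Lg))"
      using dk[of k] k i by (intro mult_mono) auto
    finally show "d k * Im (Sg (Complex (v - real k) (Im w / \<sigma>))) \<le> B * \<sigma> * (Y * exp (Y^2) * exp 1 * exp (-2 * \<bar>v - real k\<bar>) / (2 * Lg))" .
  qed
  also have "\<dots> = B * \<sigma> * (Y * exp (Y^2) * exp 1 / (2 * Lg)) * (\<Sum>k\<in>{1..K}. exp (-2 * \<bar>v - real k\<bar>))"
    by (simp add: sum_distrib_left mult.assoc)
  also have "\<dots> \<le> B * \<sigma> * (Y * exp (Y^2) * exp 1 / (2 * Lg)) * 4"
    using B \<sigma> L by (intro mult_left_mono sum_exp_bound) (auto simp: Y_def)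
  finally show ?thesis by (simp add: Y_def)
qed

lemma exp_neg_of_real: "exp (- complex_of_real x) = complex_of_real (exp (- x))"
proof -
  have "exp (- complex_of_real x) = exp (of_real (-x))" by simp
  also have "\<dots> = of_real (exp (-x))" by (rule exp_of_real)
  finally show ?thesis .
qed

lemma radial_lip:
  fixes h :: "complex \<Rightarrow> complex"
  assumes holh: "h holomorphic_on ball 0 1"
    and Bh: "\<And>z. z \<in> ball 0 1 \<Longrightarrow> (1 - norm z ^ 2) * norm (deriv h z) \<le> B"
    and z: "norm \<zeta> = 1" and x: "0 \<le> x" and y: "0 \<le> y"
  shows "norm (h (of_real (1 - exp (-x)) * \<zeta>) - h (of_real (1 - exp (-y)) * \<zeta>)) \<le> B * \<bar>x - y\<bar>"
proof -
  define q where "q s = h (\<zeta> * (1 - exp (-s)))" for s :: complex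
  define S where "S = closed_segment (complex_of_real x) (of_real y)"
  have Sreal: "\<exists>u\<ge>0. s = of_real u" if "s \<in> S" for s
  proof -
    have "\<exists>t. 0 \<le> t \<and> t \<le> 1 \<and> s = (1 - t) *\<^sub>R complex_of_real x + t *\<^sub>R of_real y"
      using that unfolding S_def in_segment by simp
    then obtain t where t: "0 \<le> t" "t \<le> 1" and s: "s = (1 - t) *\<^sub>R complex_of_real x + t *\<^sub>R of_real y"
      by blast
    have "s = of_real ((1 - t) * x + t * y)" unfolding s by (simp add: scaleR_conv_of_real)
    moreover have "0 \<le> (1 - t) * x + t * y" using t x y by simp
    ultimately show ?thesis by blast
  qed
  have pin: "\<zeta> * (1 - exp (- of_real u)) \<in> ball 0 1" and npu: "norm (\<zeta> * (1 - exp (- of_real u))) = 1 - exp (-u)"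
    if "0 \<le> u" for u :: real
  proof -
    have "exp (- complex_of_real u) = exp (of_real (-u))" by simp
    also have "\<dots> = of_real (exp (-u))" by (rule exp_of_real)
    finally have e: "1 - exp (- complex_of_real u) = of_real (1 - exp (-u))" by simp
    have eu: "exp (-u) \<le> 1" "0 < exp (-u)" using that by auto
    have "norm (\<zeta> * (1 - exp (- of_real u))) = norm \<zeta> * norm (complex_of_real (1 - exp (-u)))"
      by (simp only: e norm_mult)
    also have "\<dots> = \<bar>1 - exp (-u)\<bar>" using z by (simp only: norm_of_real) simp
    also have "\<dots> = 1 - exp (-u)" using eu by simp
    finally show "norm (\<zeta> * (1 - exp (- of_real u))) = 1 - exp (-u)" .
    then show "\<zeta> * (1 - exp (- of_real u)) \<in> ball 0 1" by simp
  qed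
  have der: "(q has_field_derivative deriv h (\<zeta> * (1 - exp (-s))) * (\<zeta> * exp (-s))) (at s within S)" if sS: "s \<in> S" for s
  proof -
    obtain u where u: "u \<ge> 0" "s = of_real u" using Sreal[OF sS] by blast
    have p: "\<zeta> * (1 - exp (-s)) \<in> ball 0 1" using pin[OF u(1)] u(2) by simp
    have hd: "(h has_field_derivative deriv h (\<zeta> * (1 - exp (-s)))) (at (\<zeta> * (1 - exp (-s))))"
      by (rule holomorphic_derivI[OF holh open_ball p])
    have gd: "((\<lambda>s. \<zeta> * (1 - exp (-s))) has_field_derivative \<zeta> * exp (-s)) (at s)"
      by (auto intro!: derivative_eq_intros)
    have "(q has_field_derivative deriv h (\<zeta> * (1 - exp (-s))) * (\<zeta> * exp (-s))) (at s)"
      unfolding q_def[abs_def] using DERIV_chain2[where g="\<lambda>s. \<zeta> * (1 - exp (-s))", OF hd gd] by simp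
    then show ?thesis by (rule has_field_derivative_at_within)
  qed
  have bnd: "norm (deriv h (\<zeta> * (1 - exp (-s))) * (\<zeta> * exp (-s))) \<le> B" if sS: "s \<in> S" for s
  proof -
    obtain u where u: "u \<ge> 0" "s = of_real u" using Sreal[OF sS] by blast
    define r where "r = 1 - exp (-u)"
    have r: "0 \<le> r" "r < 1" using u by (auto simp: r_def)
    have "exp (-s) = exp (of_real (-u))" using u by simp
    also have "\<dots> = of_real (exp (-u))" by (rule exp_of_real)
    finally have es: "exp (-s) = of_real (exp (-u))" .
    have n1: "norm (\<zeta> * exp (-s)) = exp (-u)" using z es by (simp add: norm_mult)
    have r2: "1 - r^2 \<ge> exp (-u)"
    proof -
      have "1 - r^2 = (1 - r) * (1 + r)" by (simp add: power2_eq_square algebra_simps)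
      also have "\<dots> \<ge> (1 - r) * 1" using r by (intro mult_left_mono) auto
      finally show ?thesis by (simp add: r_def)
    qed
    have "(1 - r^2) * norm (deriv h (\<zeta> * (1 - exp (-s)))) \<le> B"
      using Bh[OF pin[OF u(1)]] npu[OF u(1)] u(2) by (simp add: r_def)
    then have "exp (-u) * norm (deriv h (\<zeta> * (1 - exp (-s)))) \<le> B"
      using mult_right_mono[OF r2 norm_ge_zero[of "deriv h (\<zeta> * (1 - exp (-s)))"]] by linarith
    then show ?thesis unfolding norm_mult[of "deriv h (\<zeta> * (1 - exp (-s)))" "\<zeta> * exp (-s)"] n1 by (simp only: mult.commute)
  qed
  have "norm (q (of_real x) - q (of_real y)) \<le> B * norm (complex_of_real x - of_real y)"
    by (rule field_differentiable_bound[OF _ der bnd]) (auto simp: S_def)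
  moreover have "q (of_real x) = h (of_real (1 - exp (-x)) * \<zeta>)" "q (of_real y) = h (of_real (1 - exp (-y)) * \<zeta>)"
    by (simp_all add: q_def exp_neg_of_real mult.commute)
  moreover have "norm (complex_of_real x - of_real y) = \<bar>x - y\<bar>"
    unfolding of_real_diff[symmetric] norm_of_real ..
  ultimately show ?thesis by simp
qed

definition Wf :: "complex \<Rightarrow> complex \<Rightarrow> complex" where "Wf \<zeta> z = - Ln (1 - cnj \<zeta> * z)"
definition FF :: "(complex \<Rightarrow> complex) \<Rightarrow> real \<Rightarrow> complex \<Rightarrow> complex \<Rightarrow> complex" where
  "FF \<Phi> a \<zeta> z = exp (of_real (a + 1) * Wf \<zeta> z - \<i> * \<Phi> (Wf \<zeta> z))"

lemma re_pos:
  assumes z: "norm \<zeta> = 1" and w: "w \<in> ball 0 1"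
  shows "Re (1 - cnj \<zeta> * w) > 0" and "norm (1 - cnj \<zeta> * w) \<ge> 1 - norm w" and "1 - cnj \<zeta> * w \<noteq> 0"
proof -
  have nw: "norm (cnj \<zeta> * w) = norm w" using z by (simp add: norm_mult)
  have "Re (cnj \<zeta> * w) \<le> norm (cnj \<zeta> * w)" by (rule complex_Re_le_cmod)
  then show p: "Re (1 - cnj \<zeta> * w) > 0" using nw w by simp
  have "norm (1::complex) - norm (cnj \<zeta> * w) \<le> norm (1 - cnj \<zeta> * w)" by (rule norm_triangle_ineq2)
  then show "norm (1 - cnj \<zeta> * w) \<ge> 1 - norm w" using nw by simp
  show "1 - cnj \<zeta> * w \<noteq> 0"
  proof
    assume "1 - cnj \<zeta> * w = 0"
    then have "Re (1 - cnj \<zeta> * w) = 0" by simp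
    with p show False by simp
  qed
qed

lemma Wf_holo: assumes z: "norm \<zeta> = 1" shows "Wf \<zeta> holomorphic_on ball 0 1"
proof -
  have "(\<lambda>w. Ln (1 - cnj \<zeta> * w)) holomorphic_on ball 0 1"
  proof (rule holomorphic_on_Ln')
    fix w :: complex assume "w \<in> ball 0 1"
    from re_pos(1)[OF z this] show "1 - cnj \<zeta> * w \<notin> \<real>\<^sub>\<le>\<^sub>0" by (auto simp: complex_nonpos_Reals_iff)
  qed (intro holomorphic_intros)
  from holomorphic_on_minus[OF this] show ?thesis unfolding Wf_def[abs_def] .
qed

lemma FF_holo:
  assumes z: "norm \<zeta> = 1" and hP: "\<Phi> holomorphic_on UNIV"
  shows "FF \<Phi> a \<zeta> holomorphic_on ball 0 1"
proof -
  have "(\<Phi> \<circ> Wf \<zeta>) holomorphic_on ball 0 1"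
    by (rule holomorphic_on_compose_gen[OF Wf_holo[OF z] hP]) auto
  then have "(\<lambda>z. \<Phi> (Wf \<zeta> z)) holomorphic_on ball 0 1" by (simp add: o_def)
  then show ?thesis unfolding FF_def[abs_def] using Wf_holo[OF z] by (intro holomorphic_intros)
qed

lemma FF_norm:
  assumes z: "norm \<zeta> = 1" and a: "a > 0" and w: "w \<in> ball 0 1"
    and M: "\<And>u. \<bar>Im u\<bar> < pi / 2 \<Longrightarrow> Im (\<Phi> u) \<le> M"
  shows "norm (FF \<Phi> a \<zeta> w) \<le> exp M * (1 - norm w) powr (-(a+1))"
proof -
  define n where "n = norm (1 - cnj \<zeta> * w)"
  have n0: "n > 0" and n1: "n \<ge> 1 - norm w" using re_pos[OF z w] by (auto simp: n_def)
  have nw1: "1 - norm w > 0" using w by simp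
  have ReW: "Re (Wf \<zeta> w) = - ln n" using re_pos(3)[OF z w] by (simp add: Wf_def n_def)
  have "\<bar>Im (Ln (1 - cnj \<zeta> * w))\<bar> < pi / 2" by (rule Re_Ln_pos_lt_imp[OF re_pos(1)[OF z w]])
  then have "\<bar>Im (Wf \<zeta> w)\<bar> < pi / 2" by (simp add: Wf_def)
  then have IP: "Im (\<Phi> (Wf \<zeta> w)) \<le> M" by (rule M)
  have "norm (FF \<Phi> a \<zeta> w) = exp ((a + 1) * Re (Wf \<zeta> w) + Im (\<Phi> (Wf \<zeta> w)))"
    by (simp add: FF_def)
  also have "(a + 1) * Re (Wf \<zeta> w) + Im (\<Phi> (Wf \<zeta> w)) = -(a+1) * ln n + Im (\<Phi> (Wf \<zeta> w))"
    by (simp add: ReW algebra_simps)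
  also have "exp (-(a+1) * ln n + Im (\<Phi> (Wf \<zeta> w))) = exp (-(a+1) * ln n) * exp (Im (\<Phi> (Wf \<zeta> w)))"
    by (rule exp_add)
  also have "exp (-(a+1) * ln n) = n powr (-(a+1))" using n0 by (simp add: powr_def)
  also have "n powr (-(a+1)) \<le> (1 - norm w) powr (-(a+1))"
    using a n1 nw1 by (intro powr_mono2') auto
  then have "n powr (-(a+1)) * exp (Im (\<Phi> (Wf \<zeta> w))) \<le> (1 - norm w) powr (-(a+1)) * exp M"
    using IP by (intro mult_mono) auto
  finally show ?thesis by (simp add: mult.commute)
qed

lemma Wf_radial:
  assumes z: "norm \<zeta> = 1" and r: "0 \<le> r" "r < 1"
  shows "Wf \<zeta> (of_real r * \<zeta>) = of_real (- ln (1 - r))"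
proof -
  have zz: "cnj \<zeta> * \<zeta> = 1" using complex_norm_square[of \<zeta>] z by (simp add: mult.commute)
  have "cnj \<zeta> * (of_real r * \<zeta>) = of_real r * (cnj \<zeta> * \<zeta>)" by (simp only: mult.assoc mult.left_commute)
  also have "\<dots> = of_real r" using zz by simp
  finally have e: "1 - cnj \<zeta> * (of_real r * \<zeta>) = of_real (1 - r)" by simp
  have "Ln (complex_of_real (1 - r)) = of_real (ln (1 - r))" using r by (intro Ln_of_real) simp
  then show ?thesis unfolding Wf_def e by simp
qed

lemma FF_radial_re:
  assumes z: "norm \<zeta> = 1" and r: "0 \<le> r" "r < 1"
    and real: "Im (\<Phi> (of_real (- ln (1 - r)))) = 0"
  shows "Re (FF \<Phi> a \<zeta> (of_real r * \<zeta>) * exp c)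
     = (1 - r) powr (-(a+1)) * exp (Re c) * cos (Im c - Re (\<Phi> (of_real (- ln (1 - r)))))"
proof -
  define x where "x = - ln (1 - r)"
  define p where "p = Re (\<Phi> (of_real x))"
  have Px: "\<Phi> (of_real x) = of_real p" using real by (simp add: complex_eq_iff p_def x_def)
  have "FF \<Phi> a \<zeta> (of_real r * \<zeta>) * exp c = exp (of_real ((a+1) * x) - \<i> * of_real p + c)"
    by (simp add: FF_def Wf_radial[OF z r] x_def[symmetric] Px exp_add)
  then have "Re (FF \<Phi> a \<zeta> (of_real r * \<zeta>) * exp c) = exp ((a+1) * x + Re c) * cos (Im c - p)"
    by (simp add: Re_exp)
  also have "exp ((a+1) * x + Re c) = exp ((a+1) * x) * exp (Re c)" by (simp add: exp_add)
  also have "exp ((a+1) * x) = (1 - r) powr (-(a+1))" using r by (simp add: powr_def x_def algebra_simps)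
  finally show ?thesis by (simp add: p_def x_def)
qed

lemma int_powr:
  fixes a t :: real
  assumes a: "a > 0" and t: "0 \<le> t" "t < 1"
  shows "((\<lambda>r. (1 - r) powr (-(a+1))) has_integral ((1 - t) powr (-a) / a - 1 / a)) {0..t}"
proof -
  have d: "((\<lambda>r. (1 - r) powr (-a) / a) has_real_derivative (1 - r) powr (-(a+1))) (at r)" if r: "r < 1" for r
  proof -
    have g: "((\<lambda>r. 1 - r) has_real_derivative -1) (at r)" by (auto intro!: derivative_eq_intros)
    have f: "((\<lambda>r. -a) has_real_derivative 0) (at r)" by (auto intro!: derivative_eq_intros)
    have "((\<lambda>r. (1 - r) powr (-a)) has_real_derivative (1 - r) powr (-a) * (0 * ln (1 - r) + (-1) * (-a) / (1 - r))) (at r)"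
      using DERIV_powr[OF g _ f] r by simp
    then have D: "((\<lambda>r. (1 - r) powr (-a) / a) has_real_derivative (1 - r) powr (-a) * (0 * ln (1 - r) + (-1) * (-a) / (1 - r)) / a) (at r)"
      by (rule DERIV_cdivide)
    have e0: "-(a+1) = -a + (-1)" by simp
    have e1: "(1 - r) powr (-(a+1)) = (1 - r) powr (-a) * (1 - r) powr (-1)"
      unfolding e0 by (rule powr_add)
    have e2: "(1 - r) powr (-1) = inverse (1 - r)" using r by (simp add: powr_minus)
    have "(1 - r) powr (-a) * (0 * ln (1 - r) + (-1) * (-a) / (1 - r)) / a = (1 - r) powr (-(a+1))"
      unfolding e1 e2 using a r by (simp add: field_simps)
    then show ?thesis using D by simp
  qed
  have "((\<lambda>r. (1 - r) powr (-(a+1))) has_integral ((1 - t) powr (-a) / a - (1 - 0) powr (-a) / a)) {0..t}"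
  proof (rule fundamental_theorem_of_calculus)
    show "0 \<le> t" by fact
    fix r assume "r \<in> {0..t}"
    then have "r < 1" using t by simp
    from d[OF this] show "((\<lambda>r. (1 - r) powr (-a) / a) has_vector_derivative (1 - r) powr (-(a+1))) (at r within {0..t})"
      by (simp add: has_real_derivative_iff_has_vector_derivative[symmetric] has_field_derivative_at_within)
  qed
  then show ?thesis by simp
qed

lemma primitive_hinf:
  fixes F :: "complex \<Rightarrow> complex"
  assumes a: "a > 0" and holF: "F holomorphic_on ball 0 1" and E: "E \<ge> 0"
    and Fb: "\<And>w. w \<in> ball 0 1 \<Longrightarrow> norm (F w) \<le> E * (1 - norm w) powr (-(a+1))"
  shows "(\<lambda>z. contour_integral (linepath 0 z) F) \<in> Hinf_weighted a"
    and "Hinf_norm a (\<lambda>z. contour_integral (linepath 0 z) F) \<le> 2 powr a * E / a"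
    and "\<And>w. w \<in> ball 0 1 \<Longrightarrow> deriv (\<lambda>z. contour_integral (linepath 0 z) F) w = F w"
proof -
  define f where "f = (\<lambda>z. contour_integral (linepath 0 z) F)"
  have holf: "f holomorphic_on ball 0 1" unfolding f_def by (rule primitive_ball(1)[OF holF])
  show "deriv (\<lambda>z. contour_integral (linepath 0 z) F) w = F w" if "w \<in> ball 0 1" for w
    by (rule DERIV_imp_deriv[OF primitive_ball(2)[OF holF that]])
  have contF: "continuous_on (ball 0 1) F" using holF by (rule holomorphic_on_imp_continuous_on)
  have key: "(1 - norm z ^ 2) powr a * norm (f z) \<le> 2 powr a * E / a" if z: "z \<in> ball 0 1" for z
  proof -
    define t where "t = norm z"
    define \<eta> where "\<eta> = exp (\<i> * of_real (Arg2pi z))"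
    have zeq: "z = of_real t * \<eta>" and n\<eta>: "norm \<eta> = 1"
      using polar_ball[of z] by (auto simp: t_def \<eta>_def)
    have t: "0 \<le> t" "t < 1" using z by (auto simp: t_def)
    have inball: "of_real r * \<eta> \<in> ball 0 1" if "r \<in> {0..t}" for r :: real
      using that t n\<eta> by (simp add: norm_mult)
    have c1: "continuous_on {0..t} (\<lambda>r. norm (F (of_real r * \<eta>)))"
      by (intro continuous_intros continuous_on_compose2[OF contF]) (use inball in auto)
    have I: "((\<lambda>r. (1 - r) powr (-(a+1))) has_integral ((1 - t) powr (-a) / a - 1 / a)) {0..t}"
      by (rule int_powr[OF a t])
    have "norm (f z) \<le> integral {0..t} (\<lambda>r. norm (F (of_real r * \<eta>)))"
      unfolding f_def zeq by (rule radial_bound[OF contF t n\<eta>])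
    also have "\<dots> \<le> integral {0..t} (\<lambda>r. E * (1 - r) powr (-(a+1)))"
    proof (rule integral_le)
      show "(\<lambda>r. norm (F (of_real r * \<eta>))) integrable_on {0..t}" using c1 by (rule integrable_continuous_interval)
      show "(\<lambda>r. E * (1 - r) powr (-(a+1))) integrable_on {0..t}"
      proof -
        have "(\<lambda>r. (1 - r) powr (-(a+1))) integrable_on {0..t}" using I by blast
        then show ?thesis by (rule integrable_on_mult_right)
      qed
      fix r assume r: "r \<in> {0..t}"
      have "norm (of_real r * \<eta>) = r" using r n\<eta> by (simp add: norm_mult)
      then show "norm (F (of_real r * \<eta>)) \<le> E * (1 - r) powr (-(a+1))"
        using Fb[OF inball[OF r]] by simp
    qed
    also have "\<dots> = E * ((1 - t) powr (-a) / a - 1 / a)"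
      using I by (simp add: has_integral_iff)
    also have "\<dots> \<le> E * ((1 - t) powr (-a) / a)" using E a by (intro mult_left_mono) auto
    finally have fz: "norm (f z) \<le> E * ((1 - t) powr (-a) / a)" .
    have t2: "1 - t^2 \<le> 2 * (1 - t)" "0 \<le> 1 - t^2"
    proof -
      have "1 - t^2 = (1 - t) * (1 + t)" by (simp add: power2_eq_square algebra_simps)
      also have "\<dots> \<le> (1 - t) * 2" using t by (intro mult_left_mono) auto
      finally show "1 - t^2 \<le> 2 * (1 - t)" by simp
      show "0 \<le> 1 - t^2" using t by (simp add: power_le_one)
    qed
    have "(1 - norm z ^ 2) powr a \<le> (2 * (1 - t)) powr a"
      unfolding t_def[symmetric] using t2 a by (intro powr_mono2) auto
    also have "\<dots> = 2 powr a * (1 - t) powr a" using t by (intro powr_mult)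
    finally have p: "(1 - norm z ^ 2) powr a \<le> 2 powr a * (1 - t) powr a" .
    have "(1 - norm z ^ 2) powr a * norm (f z) \<le> (2 powr a * (1 - t) powr a) * (E * ((1 - t) powr (-a) / a))"
      using p fz by (intro mult_mono) auto
    also have "\<dots> = 2 powr a * E / a * ((1 - t) powr a * (1 - t) powr (-a))" by (simp add: field_simps)
    also have "(1 - t) powr a * (1 - t) powr (-a) = 1" using t by (simp add: powr_add[symmetric])
    finally show ?thesis by simp
  qed
  show "f \<in> Hinf_weighted a" by (rule hinf_memI[OF holf key])
  show "Hinf_norm a f \<le> 2 powr a * E / a" by (rule hinf_norm_le[OF key])
qed

lemma lower_bound:
  fixes g h f \<Phi> :: "complex \<Rightarrow> complex"
  assumes a: "a > 0" and z: "norm \<zeta> = 1" and t: "0 \<le> t" "t < 1"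
    and holg: "g holomorphic_on ball 0 1" and eh: "\<And>z. z \<in> ball 0 1 \<Longrightarrow> exp (h z) = g z"
    and hP: "\<Phi> holomorphic_on UNIV" and realP: "\<And>x. Im (\<Phi> (of_real x)) = 0"
    and appr: "\<And>r. r \<in> {0..t} \<Longrightarrow> \<bar>Im (h (of_real r * \<zeta>)) - Re (\<Phi> (of_real (- ln (1 - r))))\<bar> \<le> pi / 3"
    and df: "\<And>w. w \<in> ball 0 1 \<Longrightarrow> deriv f w = FF \<Phi> a \<zeta> w"
  shows "1/2 * integral {0..t} (\<lambda>r. norm (g (of_real r * \<zeta>)) / (1 - r\<^sup>2) powr (a + 1)) \<le> norm (S_op g f (of_real t * \<zeta>))"
proof -
  define G where "G w = FF \<Phi> a \<zeta> w * g w" for w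
  have holF: "FF \<Phi> a \<zeta> holomorphic_on ball 0 1" by (rule FF_holo[OF z hP])
  have holG: "G holomorphic_on ball 0 1" unfolding G_def[abs_def] using holF holg by (intro holomorphic_intros)
  have contG: "continuous_on (ball 0 1) G" using holG by (rule holomorphic_on_imp_continuous_on)
  have contg: "continuous_on (ball 0 1) g" using holg by (rule holomorphic_on_imp_continuous_on)
  have inball: "of_real r * \<zeta> \<in> ball 0 1" if "r \<in> {0..t}" for r :: real
    using that t z by (simp add: norm_mult)
  have tz: "of_real t * \<zeta> \<in> ball 0 1" using inball[of t] t by simp
  have seg: "closed_segment 0 (of_real t * \<zeta>) \<subseteq> ball 0 1"
    using tz convex_ball[of 0 1] by (simp add: closed_segment_subset)
  have "S_op g f (of_real t * \<zeta>) = contour_integral (linepath 0 (of_real t * \<zeta>)) G"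
    unfolding S_op_def
  proof (rule contour_integral_cong)
    fix w assume "w \<in> path_image (linepath 0 (of_real t * \<zeta>))"
    then have "w \<in> ball 0 1" using seg by auto
    then show "deriv f w * g w = G w" by (simp add: df G_def)
  qed simp
  also have "\<dots> = \<zeta> * integral {0..t} (\<lambda>r. G (of_real r * \<zeta>))"
    by (rule radial_integral(1)[OF contG t z])
  finally have S: "norm (S_op g f (of_real t * \<zeta>)) = norm (integral {0..t} (\<lambda>r. G (of_real r * \<zeta>)))"
    using z by (simp add: norm_mult)
  have intG: "(\<lambda>r. G (of_real r * \<zeta>)) integrable_on {0..t}" by (rule radial_integral(2)[OF contG t z])
  have "Re (integral {0..t} (\<lambda>r. G (of_real r * \<zeta>))) = integral {0..t} (\<lambda>r. Re (G (of_real r * \<zeta>)))"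
    using has_integral_Re[OF integrable_integral[OF intG]] by (simp add: has_integral_iff)
  moreover have intRe: "(\<lambda>r. Re (G (of_real r * \<zeta>))) integrable_on {0..t}"
    using has_integral_Re[OF integrable_integral[OF intG]] by blast
  have r2: "1 - r^2 > 0" if "r \<in> {0..t}" for r :: real
    using that t by (simp add: power_less_one_iff abs_less_iff)
  have c2: "continuous_on {0..t} (\<lambda>r. norm (g (of_real r * \<zeta>)) / (1 - r\<^sup>2) powr (a + 1))"
    by (intro continuous_intros continuous_on_compose2[OF contg]) (use inball r2 in \<open>force+\<close>)
  have "integral {0..t} (\<lambda>r. 1/2 * (norm (g (of_real r * \<zeta>)) / (1 - r\<^sup>2) powr (a + 1)))
      \<le> integral {0..t} (\<lambda>r. Re (G (of_real r * \<zeta>)))"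
  proof (rule integral_le)
    show "(\<lambda>r. 1/2 * (norm (g (of_real r * \<zeta>)) / (1 - r\<^sup>2) powr (a + 1))) integrable_on {0..t}"
      using c2 by (intro integrable_continuous_interval continuous_on_mult_left)
    show "(\<lambda>r. Re (G (of_real r * \<zeta>))) integrable_on {0..t}" by (rule intRe)
    fix r assume r: "r \<in> {0..t}"
    have r1: "0 \<le> r" "r < 1" using r t by auto
    have ib: "of_real r * \<zeta> \<in> ball 0 1" by (rule inball[OF r])
    define x where "x = - ln (1 - r)"
    define c where "c = h (of_real r * \<zeta>)"
    have gc: "g (of_real r * \<zeta>) = exp c" using eh[OF ib] by (simp add: c_def)
    have ReG: "Re (G (of_real r * \<zeta>)) = (1 - r) powr (-(a+1)) * exp (Re c) * cos (Im c - Re (\<Phi> (of_real x)))"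
      unfolding G_def gc x_def by (rule FF_radial_re[where \<Phi>=\<Phi> and a=a, OF z r1 realP[of "- ln (1 - r)"]])
    have ng: "norm (g (of_real r * \<zeta>)) = exp (Re c)" by (simp add: gc)
    have cs: "cos (Im c - Re (\<Phi> (of_real x))) \<ge> 1/2"
    proof -
      have ab: "\<bar>Im c - Re (\<Phi> (of_real x))\<bar> \<le> pi / 3" using appr[OF r] by (simp add: c_def x_def)
      have "cos (pi / 3) \<le> cos \<bar>Im c - Re (\<Phi> (of_real x))\<bar>"
        using ab by (intro cos_monotone_0_pi_le) auto
      then show ?thesis by (simp add: cos_60)
    qed
    have pw: "1 / (1 - r\<^sup>2) powr (a + 1) \<le> (1 - r) powr (-(a+1))"
    proof -
      have "(1 - r) powr (a + 1) \<le> (1 - r\<^sup>2) powr (a + 1)"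
        using r1 a by (intro powr_mono2) (auto simp: power2_eq_square mult_left_le_one_le)
      moreover have p1: "(1 - r) powr (a + 1) > 0" using r1 by simp
      moreover have p2: "(1 - r\<^sup>2) powr (a + 1) > 0" using r2[OF r] by simp
      ultimately have "1 / (1 - r\<^sup>2) powr (a + 1) \<le> 1 / (1 - r) powr (a + 1)"
        by (intro divide_left_mono mult_pos_pos) auto
      then show ?thesis by (simp only: powr_minus_divide)
    qed
    have "1/2 * (norm (g (of_real r * \<zeta>)) / (1 - r\<^sup>2) powr (a + 1)) = exp (Re c) * (1 / (1 - r\<^sup>2) powr (a + 1)) * (1/2)"
      by (simp add: ng)
    also have "\<dots> \<le> exp (Re c) * (1 - r) powr (-(a+1)) * cos (Im c - Re (\<Phi> (of_real x)))"
      using pw cs by (intro mult_mono mult_left_mono) auto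
    also have "\<dots> = Re (G (of_real r * \<zeta>))" by (simp add: ReG)
    finally show "1/2 * (norm (g (of_real r * \<zeta>)) / (1 - r\<^sup>2) powr (a + 1)) \<le> Re (G (of_real r * \<zeta>))" .
  qed
  moreover have eqi: "integral {0..t} (\<lambda>r. 1/2 * (norm (g (of_real r * \<zeta>)) / (1 - r\<^sup>2) powr (a + 1)))
      = 1/2 * integral {0..t} (\<lambda>r. norm (g (of_real r * \<zeta>)) / (1 - r\<^sup>2) powr (a + 1))"
    by (rule integral_mult_right)
  ultimately have "1/2 * integral {0..t} (\<lambda>r. norm (g (of_real r * \<zeta>)) / (1 - r\<^sup>2) powr (a + 1))
      \<le> Re (integral {0..t} (\<lambda>r. G (of_real r * \<zeta>)))"
    by linarith
  also have "\<dots> \<le> norm (integral {0..t} (\<lambda>r. G (of_real r * \<zeta>)))" by (rule complex_Re_le_cmod)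
  finally show ?thesis using S by simp
qed

lemma necessity_key:
  fixes g h :: "complex \<Rightarrow> complex"
  assumes a: "\<alpha> > 0" and holg: "g holomorphic_on ball 0 1"
    and holh: "h holomorphic_on ball 0 1" and eh: "\<forall>z\<in>ball 0 1. exp (h z) = g z" and hB: "h \<in> Bloch"
  shows "\<exists>A c. c > 0 \<and> (\<forall>t \<zeta>. 0 \<le> t \<longrightarrow> t < 1 \<longrightarrow> norm \<zeta> = 1 \<longrightarrow>
     (\<exists>f\<in>Hinf_weighted \<alpha>. Hinf_norm \<alpha> f \<le> A \<and>
        c * integral {0..t} (\<lambda>r. norm (g (of_real r * \<zeta>)) / (1 - r\<^sup>2) powr (\<alpha> + 1)) \<le> norm (S_op g f (of_real t * \<zeta>))))"
proof -
  have "\<exists>B0. \<forall>z\<in>ball 0 1. norm ((1 - norm z ^ 2) * norm (deriv h z)) \<le> B0"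
    using hB unfolding Bloch_def bounded_iff by auto
  then obtain B0 where B0': "\<forall>z\<in>ball 0 1. norm ((1 - norm z ^ 2) * norm (deriv h z)) \<le> B0" by blast
  have B0: "norm ((1 - norm z ^ 2) * norm (deriv h z)) \<le> B0" if "z \<in> ball 0 1" for z
    using B0' that by blast
  define B where "B = max B0 0"
  have B: "B \<ge> 0" by (simp add: B_def)
  have Bh: "(1 - norm z ^ 2) * norm (deriv h z) \<le> B" if "z \<in> ball 0 1" for z
    using B0[OF that] unfolding B_def by (smt (verit) abs_le_iff real_norm_def)
  have L: "Lg > 0" by (rule Lg_props(1))
  define C0 where "C0 = (B + 1) * (1 + exp 1 / Lg)"
  have c1: "B + 1 > 0" using B by simp
  have c2: "1 + exp 1 / Lg > 0" using L by (simp add: add_pos_pos)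
  have C0: "C0 > 0" unfolding C0_def using c1 c2 by (rule mult_pos_pos)
  define \<sigma> where "\<sigma> = min 1 ((pi / 3) / C0)"
  have \<sigma>: "\<sigma> > 0" unfolding \<sigma>_def using C0 by simp
  have B\<sigma>: "B * \<sigma> * (1 + exp 1 / Lg) \<le> pi / 3"
  proof -
    have "B * \<sigma> * (1 + exp 1 / Lg) \<le> (B + 1) * \<sigma> * (1 + exp 1 / Lg)"
      using \<sigma> L by (intro mult_right_mono) auto
    also have "\<dots> = \<sigma> * C0" by (simp add: C0_def)
    also have "\<dots> \<le> ((pi / 3) / C0) * C0" using C0 by (intro mult_right_mono) (auto simp: \<sigma>_def)
    also have "\<dots> = pi / 3" using C0 by simp
    finally show ?thesis .
  qed
  define M where "M = B * \<sigma> * ((pi / (2 * \<sigma>)) * exp ((pi / (2 * \<sigma>))^2) * exp 1 / (2 * Lg)) * 4"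
  define A where "A = 2 powr \<alpha> * exp M / \<alpha>"
  show ?thesis
  proof (rule exI[of _ A], rule exI[of _ "1/2"], intro conjI allI impI)
    fix t :: real and \<zeta> :: complex assume t0: "0 \<le> t" and t1: "t < 1" and z: "norm \<zeta> = 1"
    define X where "X = - ln (1 - t)"
    have X0: "0 \<le> X" using t0 t1 by (simp add: X_def)
    define K where "K = nat \<lceil>X / \<sigma>\<rceil>"
    have XK: "X \<le> real K * \<sigma>"
    proof -
      have "X / \<sigma> \<le> real K" unfolding K_def by linarith
      then show ?thesis using \<sigma> by (simp add: field_simps)
    qed
    define \<phi> where "\<phi> x = Im (h (of_real (1 - exp (-x)) * \<zeta>))" for x
    have lip: "\<bar>\<phi> x - \<phi> y\<bar> \<le> B * \<bar>x - y\<bar>" if "0 \<le> x" "0 \<le> y" for x y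
    proof -
      have "\<bar>\<phi> x - \<phi> y\<bar> = \<bar>Im (h (of_real (1 - exp (-x)) * \<zeta>) - h (of_real (1 - exp (-y)) * \<zeta>))\<bar>"
        by (simp add: \<phi>_def)
      also have "\<dots> \<le> norm (h (of_real (1 - exp (-x)) * \<zeta>) - h (of_real (1 - exp (-y)) * \<zeta>))"
        by (rule abs_Im_le_cmod)
      also have "\<dots> \<le> B * \<bar>x - y\<bar>" by (rule radial_lip[OF holh Bh z that])
      finally show ?thesis .
    qed
    define \<Phi> where "\<Phi> = Phi \<phi> \<sigma> K"
    have hP: "\<Phi> holomorphic_on UNIV" unfolding \<Phi>_def by (rule Phi_holo)
    have realP: "Im (\<Phi> (of_real x)) = 0" for x unfolding \<Phi>_def Phi_real by simp
    have imP: "Im (\<Phi> u) \<le> M" if "\<bar>Im u\<bar> < pi / 2" for u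
      unfolding \<Phi>_def M_def by (rule Phi_im[OF B \<sigma> lip]) (use that in auto)
    define F where "F = FF \<Phi> \<alpha> \<zeta>"
    have holF: "F holomorphic_on ball 0 1" unfolding F_def by (rule FF_holo[OF z hP])
    have Fb: "norm (F w) \<le> exp M * (1 - norm w) powr (-(\<alpha>+1))" if "w \<in> ball 0 1" for w
      unfolding F_def by (rule FF_norm[OF z a that imP])
    define f where "f = (\<lambda>z. contour_integral (linepath 0 z) F)"
    have fH: "f \<in> Hinf_weighted \<alpha>" unfolding f_def by (rule primitive_hinf(1)[OF a holF _ Fb]) simp
    have fN: "Hinf_norm \<alpha> f \<le> A" unfolding f_def A_def by (rule primitive_hinf(2)[OF a holF _ Fb]) simp
    have df: "deriv f w = FF \<Phi> \<alpha> \<zeta> w" if "w \<in> ball 0 1" for w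
      unfolding f_def using primitive_hinf(3)[OF a holF _ Fb that] by (simp add: F_def)
    have appr: "\<bar>Im (h (of_real r * \<zeta>)) - Re (\<Phi> (of_real (- ln (1 - r))))\<bar> \<le> pi / 3" if r: "r \<in> {0..t}" for r
    proof -
      define x where "x = - ln (1 - r)"
      have r1: "0 \<le> r" "r < 1" using r t1 by auto
      have x0: "0 \<le> x" using r1 by (simp add: x_def)
      have xX: "x \<le> X" unfolding x_def X_def using r r1 t1 by simp
      have ex: "1 - exp (-x) = r" using r1 by (simp add: x_def)
      have "\<phi> x = Im (h (of_real r * \<zeta>))" by (simp add: \<phi>_def ex)
      moreover have "\<bar>\<phi> x - Re (Phi \<phi> \<sigma> K (of_real x))\<bar> \<le> B * \<sigma> * (1 + exp 1 / Lg)"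
        by (rule Phi_approx[OF B \<sigma> lip x0]) (use xX XK in auto)
      moreover have "Re (\<Phi> (of_real (- ln (1 - r)))) = Re (Phi \<phi> \<sigma> K (of_real x))"
        by (simp add: \<Phi>_def x_def)
      ultimately have "\<bar>Im (h (of_real r * \<zeta>)) - Re (\<Phi> (of_real (- ln (1 - r))))\<bar> \<le> B * \<sigma> * (1 + exp 1 / Lg)"
        by simp
      then show ?thesis using B\<sigma> by (rule order_trans)
    qed
    have "1/2 * integral {0..t} (\<lambda>r. norm (g (of_real r * \<zeta>)) / (1 - r\<^sup>2) powr (\<alpha> + 1)) \<le> norm (S_op g f (of_real t * \<zeta>))"
      by (rule lower_bound[OF a z t0 t1 holg _ hP realP appr df]) (use eh in auto)
    then show "\<exists>f\<in>Hinf_weighted \<alpha>. Hinf_norm \<alpha> f \<le> A \<and>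
        1/2 * integral {0..t} (\<lambda>r. norm (g (of_real r * \<zeta>)) / (1 - r\<^sup>2) powr (\<alpha> + 1)) \<le> norm (S_op g f (of_real t * \<zeta>))"
      using fH fN by blast
  qed simp
qed

theorem theorem2:
  fixes g :: "complex \<Rightarrow> complex" and \<alpha> \<beta> :: real
  assumes "\<alpha> > 0" and "\<beta> \<ge> 0"
    and "g holomorphic_on ball 0 1"
    and "\<forall>z\<in>ball 0 1. g z \<noteq> 0"
    and "\<exists>h. h holomorphic_on ball 0 1 \<and> (\<forall>z\<in>ball 0 1. exp (h z) = g z) \<and> h \<in> Bloch"
  shows "S_bounded g \<alpha> \<beta> \<longleftrightarrow>
    Limsup (at_left 1) (\<lambda>t::real. SUP \<theta>\<in>{0..<2*pi}. ereal ((1 - t\<^sup>2) powr \<beta> *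
        integral {0..t} (\<lambda>r. norm (g (of_real r * exp (\<i> * of_real \<theta>))) / (1 - r\<^sup>2) powr (\<alpha> + 1))))
      < \<infinity>"
proof
  assume L: "Limsup (at_left 1) (\<lambda>t::real. SUP \<theta>\<in>{0..<2*pi}. ereal ((1 - t\<^sup>2) powr \<beta> *
        integral {0..t} (\<lambda>r. norm (g (of_real r * exp (\<i> * of_real \<theta>))) / (1 - r\<^sup>2) powr (\<alpha> + 1))))
      < \<infinity>"
  obtain K where K: "\<forall>t\<in>{0..<1}. \<forall>\<theta>\<in>{0..<2*pi}. (1 - t\<^sup>2) powr \<beta> *
        integral {0..t} (\<lambda>r. norm (g (of_real r * exp (\<i> * of_real \<theta>))) / (1 - r\<^sup>2) powr (\<alpha> + 1)) \<le> K"
    using limsup_to_bound[OF L small_bound[OF assms(1,2,3)]] by blast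
  show "S_bounded g \<alpha> \<beta>"
    by (rule sufficiency[OF assms(1,2,3), of K]) (use K in auto)
next
  assume Sb: "S_bounded g \<alpha> \<beta>"
  then obtain C where C: "\<And>f. f \<in> Hinf_weighted \<alpha> \<Longrightarrow> S_op g f \<in> Hinf_weighted \<beta> \<and> Hinf_norm \<beta> (S_op g f) \<le> C * Hinf_norm \<alpha> f"
    unfolding S_bounded_def by blast
  obtain h where h: "h holomorphic_on ball 0 1" "\<forall>z\<in>ball 0 1. exp (h z) = g z" "h \<in> Bloch"
    using assms(5) by blast
  obtain A c where c: "c > 0" and Af: "\<And>t \<zeta>. 0 \<le> t \<Longrightarrow> t < 1 \<Longrightarrow> norm \<zeta> = 1 \<Longrightarrow>
     (\<exists>f\<in>Hinf_weighted \<alpha>. Hinf_norm \<alpha> f \<le> A \<and>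
        c * integral {0..t} (\<lambda>r. norm (g (of_real r * \<zeta>)) / (1 - r\<^sup>2) powr (\<alpha> + 1)) \<le> norm (S_op g f (of_real t * \<zeta>)))"
    using necessity_key[OF assms(1,3) h] by blast
  show "Limsup (at_left 1) (\<lambda>t::real. SUP \<theta>\<in>{0..<2*pi}. ereal ((1 - t\<^sup>2) powr \<beta> *
        integral {0..t} (\<lambda>r. norm (g (of_real r * exp (\<i> * of_real \<theta>))) / (1 - r\<^sup>2) powr (\<alpha> + 1))))
      < \<infinity>"
  proof (rule bound_to_limsup)
    fix t \<theta> :: real assume t: "t \<in> {0..<1}" and th: "\<theta> \<in> {0..<2*pi}"
    define \<zeta> where "\<zeta> = exp (\<i> * of_real \<theta>)"
    have n\<zeta>: "norm \<zeta> = 1" by (simp add: \<zeta>_def)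
    define I where "I = integral {0..t} (\<lambda>r. norm (g (of_real r * \<zeta>)) / (1 - r\<^sup>2) powr (\<alpha> + 1))"
    obtain f where fH: "f \<in> Hinf_weighted \<alpha>" and fA: "Hinf_norm \<alpha> f \<le> A"
      and fI: "c * I \<le> norm (S_op g f (of_real t * \<zeta>))"
      using Af[of t \<zeta>] t n\<zeta> unfolding I_def by auto
    have tz: "of_real t * \<zeta> \<in> ball 0 1" using t n\<zeta> by (simp add: norm_mult)
    have ntz: "norm (of_real t * \<zeta>) = t" using t n\<zeta> by (simp add: norm_mult)
    have pw: "0 \<le> (1 - t\<^sup>2) powr \<beta>" by simp
    have "(1 - t\<^sup>2) powr \<beta> * (c * I) \<le> (1 - t\<^sup>2) powr \<beta> * norm (S_op g f (of_real t * \<zeta>))"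
      using fI pw by (rule mult_left_mono)
    also have "\<dots> \<le> Hinf_norm \<beta> (S_op g f)"
      using hinf_pointwise[OF conjunct1[OF C[OF fH]] tz] ntz by simp
    also have "\<dots> \<le> C * Hinf_norm \<alpha> f" using C[OF fH] by simp
    also have "\<dots> \<le> max C 0 * A"
    proof -
      have "C * Hinf_norm \<alpha> f \<le> max C 0 * Hinf_norm \<alpha> f"
        using hinf_norm_nonneg[OF fH] by (intro mult_right_mono) auto
      also have "\<dots> \<le> max C 0 * A" using fA by (intro mult_left_mono) auto
      finally show ?thesis .
    qed
    finally have "c * ((1 - t\<^sup>2) powr \<beta> * I) \<le> max C 0 * A" by (simp add: algebra_simps)
    then have "(1 - t\<^sup>2) powr \<beta> * I \<le> max C 0 * A / c" using c by (simp add: field_simps)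
    then show "(1 - t\<^sup>2) powr \<beta> * integral {0..t} (\<lambda>r. norm (g (of_real r * exp (\<i> * of_real \<theta>))) / (1 - r\<^sup>2) powr (\<alpha> + 1)) \<le> max C 0 * A / c"
      by (simp add: I_def \<zeta>_def)
  qed
qed

end
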